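(* Let $n \ge 1$ and $m \ge 1$ be integers, let $\lambda > 1$ be a real number, and let $a_\alpha$, $a$, $b$, $f$ be as in the context (in particular $b(x) \ge a^\lambda(x) f(x)$ for almost all $x$). Suppose that for some real number $\sigma > 1$, $$\int_1^\infty r^{(m - n)\lambda + n - 1} q(r)\, dr = \infty, \qquad \text{where } q(r) = \mathop{\rm ess\,inf}_{B_{\sigma r} \setminus B_{r/\sigma}} f .$$ Then every solution $u$ of the inequality $$\sum_{|\alpha| = m} (-1)^m \partial^\alpha a_\alpha(x, u) \ge b(x) |u|^\lambda \quad \text{in } \mathbb{R}^n$$ is trivial, i.e. $u(x) = 0$ for almost all $x \in \mathbb{R}^n$.
   Context: For each multi-index $\alpha = (\alpha_1,\dots,\alpha_n)$ with $|\alpha| = \alpha_1 + \dots + \alpha_n = m$, $a_\alpha : \mathbb{R}^n \times \mathbb{R} \to \mathbb{R}$ is a given function, and $\partial^\alpha = \partial^{|\alpha|}/\partial x_1^{\alpha_1}\cdots\partial x_n^{\alpha_n}$. The function $b : \mathbb{R}^n \to (0,\infty)$ is positive and measurable; $a : \mathbb{R}^n \to [0,\infty)$ is a measurable function (not necessarily strictly positive) such that $|a_\alpha(x,\zeta)| \le a(x)|\zeta|$ for almost all $x \in \mathbb{R}^n$, all $\zeta \in \mathbb{R}$ and all $|\alpha| = m$; and $f \in L_{\infty,loc}(\mathbb{R}^n)$ is a non-negative function with $b(x) \ge a^\lambda(x) f(x)$ for almost all $x \in \mathbb{R}^n$. $B_r$ denotes the open ball in $\mathbb{R}^n$ of radius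 $r>0$ centered at the origin. A function $u$ is called a solution of the inequality if $b(x)|u|^\lambda \in L_{1,loc}(\mathbb{R}^n)$, $a_\alpha(x,u) \in L_{1,loc}(\mathbb{R}^n)$ for all $|\alpha| = m$, and $$\int_{\mathbb{R}^n} \sum_{|\alpha|=m} a_\alpha(x,u)\, \partial^\alpha \varphi \, dx \ge \int_{\mathbb{R}^n} b(x)|u|^\lambda \varphi\, dx$$ for every non-negative $\varphi \in C_0^\infty(\mathbb{R}^n)$. *)

theory Defs
  imports "HOL-Analysis.Analysis"
begin

text \<open>Space R^n is modelled as real^'n with n = CARD('n). Multi-indices are
functions 'n => nat; |alpha| = sum alpha UNIV.\<close>

definition partial_dir :: "'n::finite \<Rightarrow> (real^'n \<Rightarrow> real) \<Rightarrow> real^'n \<Rightarrow> real" where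
  "partial_dir i \<phi> x = deriv (\<lambda>t. \<phi> (x + t *\<^sub>R axis i 1)) 0"

fun iter_partial :: "'n::finite list \<Rightarrow> (real^'n \<Rightarrow> real) \<Rightarrow> real^'n \<Rightarrow> real" where
  "iter_partial [] \<phi> = \<phi>"
| "iter_partial (i # is) \<phi> = partial_dir i (iter_partial is \<phi>)"

definition smooth_fun :: "(real^'n::finite \<Rightarrow> real) \<Rightarrow> bool" where
  "smooth_fun \<phi> \<longleftrightarrow>
     (\<forall>is. continuous_on UNIV (iter_partial is \<phi>) \<and>
        (\<forall>i x. (\<lambda>t. iter_partial is \<phi> (x + t *\<^sub>R axis i 1)) differentiable (at 0)))"

definition test_fun :: "(real^'n::finite \<Rightarrow> real) \<Rightarrow> bool" where
  "test_fun \<phi> \<longleftrightarrow> smooth_fun \<phi> \<and> compact (closure {x. \<phi> x \<noteq> 0})"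

text \<open>The mixed partial derivative of multi-index alpha (order of differentiation
is immaterial for smooth functions; a list realising alpha is chosen).\<close>
definition dpartial :: "('n::finite \<Rightarrow> nat) \<Rightarrow> (real^'n \<Rightarrow> real) \<Rightarrow> real^'n \<Rightarrow> real" where
  "dpartial \<alpha> \<phi> = iter_partial (SOME xs. \<forall>i. count_list xs i = \<alpha> i) \<phi>"

definition multi_indices :: "nat \<Rightarrow> ('n::finite \<Rightarrow> nat) set" where
  "multi_indices m = {\<alpha>. (\<Sum>i\<in>UNIV. \<alpha> i) = m}"

definition loc_integrable :: "(real^'n::finite \<Rightarrow> real) \<Rightarrow> bool" where
  "loc_integrable g \<longleftrightarrow> (\<forall>K. compact K \<longrightarrow> set_integrable lborel K g)"

definition loc_ess_bounded :: "(real^'n::finite \<Rightarrow> real) \<Rightarrow> bool" where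
  "loc_ess_bounded g \<longleftrightarrow> g \<in> borel_measurable lborel \<and>
     (\<forall>K. compact K \<longrightarrow> (\<exists>C. AE x in lborel. x \<in> K \<longrightarrow> \<bar>g x\<bar> \<le> C))"

definition ess_inf_on :: "(real^'n::finite) set \<Rightarrow> (real^'n \<Rightarrow> real) \<Rightarrow> ereal" where
  "ess_inf_on S f = Sup {c::ereal. AE x in lborel. x \<in> S \<longrightarrow> c \<le> ereal (f x)}"

text \<open>u is a (weak) solution of sum_{|alpha|=m} (-1)^m D^alpha a_alpha(x,u) >= b |u|^lambda.\<close>
definition is_solution ::
  "nat \<Rightarrow> (('n::finite \<Rightarrow> nat) \<Rightarrow> real^'n \<Rightarrow> real \<Rightarrow> real) \<Rightarrow> (real^'n \<Rightarrow> real) \<Rightarrow> real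
     \<Rightarrow> (real^'n \<Rightarrow> real) \<Rightarrow> bool" where
  "is_solution m A b lam u \<longleftrightarrow>
     loc_integrable (\<lambda>x. b x * \<bar>u x\<bar> powr lam) \<and>
     (\<forall>\<alpha>\<in>multi_indices m. loc_integrable (\<lambda>x. A \<alpha> x (u x))) \<and>
     (\<forall>\<phi>. test_fun \<phi> \<and> (\<forall>x. 0 \<le> \<phi> x) \<longrightarrow>
        (\<integral>x. b x * \<bar>u x\<bar> powr lam * \<phi> x \<partial>lborel)
          \<le> (\<integral>x. (\<Sum>\<alpha>\<in>multi_indices m. A \<alpha> x (u x) * dpartial \<alpha> \<phi> x) \<partial>lborel))"

end

theory Submission
  imports Defs "HOL-Computational_Algebra.Polynomial" "HOL-Library.Multiset"
begin

definition C1D :: "(real \<Rightarrow> real) set" where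
  "C1D = {F. \<exists>H. H 0 = F \<and> (\<forall>k t. (H k has_real_derivative H (Suc k) t) (at t))}"

lemma C1D_coinduct:
  assumes "F \<in> X" and step: "\<forall>G\<in>X. \<exists>G'\<in>X. \<forall>t. (G has_real_derivative G' t) (at t)"
  shows "F \<in> C1D"
proof -
  define st where "st G = (SOME G'. G' \<in> X \<and> (\<forall>t. (G has_real_derivative G' t) (at t)))" for G
  have st: "st G \<in> X \<and> (\<forall>t. (G has_real_derivative st G t) (at t))" if "G \<in> X" for G
  proof -
    have "\<exists>G'. G' \<in> X \<and> (\<forall>t. (G has_real_derivative G' t) (at t))" using step that by (simp add: Bex_def)
    then show ?thesis unfolding st_def by (rule someI_ex)
  qed
  define H where "H k = (st ^^ k) F" for k
  have HX: "H k \<in> X" for k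
  proof (induction k)
    case 0 then show ?case using assms(1) by (simp add: H_def)
  next
    case (Suc k) then show ?case using st[of "H k"] by (simp add: H_def)
  qed
  have "(H k has_real_derivative H (Suc k) t) (at t)" for k t
    using st[OF HX[of k]] by (simp add: H_def)
  then show ?thesis unfolding C1D_def by (intro CollectI exI[of _ H]) (simp add: H_def)
qed

lemma C1D_deriv:
  assumes "F \<in> C1D" shows "\<exists>F'\<in>C1D. \<forall>t. (F has_real_derivative F' t) (at t)"
proof -
  obtain H where H: "H 0 = F" "\<And>k t. (H k has_real_derivative H (Suc k) t) (at t)"
    using assms unfolding C1D_def by blast
  have "H 1 \<in> C1D" unfolding C1D_def
    by (intro CollectI exI[of _ "\<lambda>k. H (Suc k)"]) (simp add: H(2))
  moreover have "\<forall>t. (F has_real_derivative H 1 t) (at t)"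
    using H(2)[of 0] unfolding H(1) by simp
  ultimately show ?thesis by (intro bexI[of _ "H 1"])
qed

lemma C1D_diff: assumes "F \<in> C1D" shows "F differentiable (at t)"
proof -
  obtain F' where "\<forall>t. (F has_real_derivative F' t) (at t)" using C1D_deriv[OF assms] by blast
  then show ?thesis unfolding real_differentiable_def by blast
qed

lemma C1D_cont: assumes "F \<in> C1D" shows "isCont F t"
proof -
  obtain F' where "\<forall>t. (F has_real_derivative F' t) (at t)" using C1D_deriv[OF assms] by blast
  then show ?thesis using DERIV_isCont by blast
qed

inductive_set alg :: "(real \<Rightarrow> real) set \<Rightarrow> (real \<Rightarrow> real) set" for B where
  gen: "F \<in> B \<Longrightarrow> F \<in> alg B"
| const: "(\<lambda>t. c) \<in> alg B"
| add: "F \<in> alg B \<Longrightarrow> G \<in> alg B \<Longrightarrow> (\<lambda>t. F t + G t) \<in> alg B"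
| mult: "F \<in> alg B \<Longrightarrow> G \<in> alg B \<Longrightarrow> (\<lambda>t. F t * G t) \<in> alg B"

lemma alg_C1D:
  assumes B: "\<forall>F\<in>B. \<exists>F'\<in>alg B. \<forall>t. (F has_real_derivative F' t) (at t)"
  shows "alg B \<subseteq> C1D"
proof -
  have *: "\<exists>F'\<in>alg B. \<forall>t. (F has_real_derivative F' t) (at t)" if "F \<in> alg B" for F
    using that
  proof (induction rule: alg.induct)
    case (gen F) show ?case by (rule bspec[OF B gen])
  next
    case (const c) then show ?case by (intro bexI[of _ "\<lambda>t. 0"]) (auto intro: alg.const)
  next
    case (add F G)
    then obtain F' G' where "F' \<in> alg B" "G' \<in> alg B"
      "\<forall>t. (F has_real_derivative F' t) (at t)" "\<forall>t. (G has_real_derivative G' t) (at t)" by blast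
    note d = this
    have "(\<lambda>t. F' t + G' t) \<in> alg B" by (rule alg.add[OF d(1) d(2)])
    moreover have "((\<lambda>t. F t + G t) has_real_derivative F' t + G' t) (at t)" for t
      using DERIV_add[OF d(3)[rule_format, of t] d(4)[rule_format, of t]] by simp
    ultimately show ?case by (intro bexI[of _ "\<lambda>t. F' t + G' t"] allI)
  next
    case (mult F G)
    then obtain F' G' where "F' \<in> alg B" "G' \<in> alg B"
      "\<forall>t. (F has_real_derivative F' t) (at t)" "\<forall>t. (G has_real_derivative G' t) (at t)" by blast
    note d = this
    have "(\<lambda>t. F' t * G t + F t * G' t) \<in> alg B"
      by (rule alg.add[OF alg.mult[OF d(1) mult.hyps(2)] alg.mult[OF mult.hyps(1) d(2)]])
    moreover have "((\<lambda>t. F t * G t) has_real_derivative F' t * G t + F t * G' t) (at t)" for t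
      using DERIV_mult[OF d(3)[rule_format, of t] d(4)[rule_format, of t]] by (simp add: mult.commute)
    ultimately show ?case by (intro bexI[of _ "\<lambda>t. F' t * G t + F t * G' t"] allI)
  qed
  show ?thesis
  proof
    fix F assume "F \<in> alg B"
    show "F \<in> C1D" by (rule C1D_coinduct[of F "alg B", OF \<open>F \<in> alg B\<close>]) (rule ballI, erule *)
  qed
qed

lemma C1D_alg:
  assumes "\<forall>F\<in>B. \<exists>F'\<in>alg B. \<forall>t. (F has_real_derivative F' t) (at t)" "F \<in> alg B"
  shows "F \<in> C1D"
  using alg_C1D[OF assms(1)] assms(2) by (rule subsetD)

lemma C1D_in_alg_deriv: "\<forall>F\<in>C1D. \<exists>F'\<in>alg C1D. \<forall>t. (F has_real_derivative F' t) (at t)"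
proof
  fix F assume "F \<in> C1D"
  then obtain F' where "F' \<in> C1D" "\<forall>t. (F has_real_derivative F' t) (at t)"
    using C1D_deriv by blast
  then show "\<exists>F'\<in>alg C1D. \<forall>t. (F has_real_derivative F' t) (at t)"
    by (intro bexI[of _ F'] alg.gen)
qed

lemma C1D_mult: "F \<in> C1D \<Longrightarrow> G \<in> C1D \<Longrightarrow> (\<lambda>t. F t * G t) \<in> C1D"
  by (rule C1D_alg[OF C1D_in_alg_deriv]) (intro alg.mult alg.add alg.gen)

lemma C1D_add: "F \<in> C1D \<Longrightarrow> G \<in> C1D \<Longrightarrow> (\<lambda>t. F t + G t) \<in> C1D"
  by (rule C1D_alg[OF C1D_in_alg_deriv]) (intro alg.mult alg.add alg.gen)

lemma C1D_const: "(\<lambda>t. c) \<in> C1D"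
  by (rule C1D_alg[OF C1D_in_alg_deriv]) (rule alg.const)


lemma C1D_inverse:
  assumes G: "G \<in> C1D" and pos: "\<forall>t. G t > 0"
  shows "(\<lambda>t. inverse (G t)) \<in> C1D"
proof -
  let ?B = "C1D \<union> {\<lambda>t. inverse (G t)}"
  have "\<forall>F\<in>?B. \<exists>F'\<in>alg ?B. \<forall>t. (F has_real_derivative F' t) (at t)"
  proof
    fix F assume "F \<in> ?B"
    then show "\<exists>F'\<in>alg ?B. \<forall>t. (F has_real_derivative F' t) (at t)"
    proof
      assume "F \<in> C1D" then show ?thesis using C1D_deriv alg.gen by (metis UnI1)
    next
      assume F: "F \<in> {\<lambda>t. inverse (G t)}"
      obtain G' where G': "G' \<in> C1D" "\<forall>t. (G has_real_derivative G' t) (at t)"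
        using C1D_deriv[OF G] by blast
      have "(\<lambda>t. (-1) * G' t * (inverse (G t) * inverse (G t))) \<in> alg ?B"
        using G' by (intro alg.mult alg.const alg.gen) auto
      moreover have "(F has_real_derivative (-1) * G' t * (inverse (G t) * inverse (G t))) (at t)" for t
        using F G' pos[rule_format, of t]
        by (auto intro!: derivative_eq_intros simp: power2_eq_square field_simps)
      ultimately show ?thesis by (intro bexI[of _ "\<lambda>t. (-1) * G' t * (inverse (G t) * inverse (G t))"]) auto
    qed
  qed
  moreover have "(\<lambda>t. inverse (G t)) \<in> alg ?B" by (rule alg.gen) simp
  ultimately show ?thesis by (rule C1D_alg)
qed

lemma C1D_affine:
  assumes "F \<in> C1D" shows "(\<lambda>t. F (a * t + b)) \<in> C1D"
proof -
  let ?X = "{G. \<exists>c F. F \<in> C1D \<and> G = (\<lambda>t. c * F (a * t + b))}"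
  have "(\<lambda>t. F (a * t + b)) \<in> ?X" using assms by (auto intro!: exI[of _ 1])
  moreover have "\<forall>G\<in>?X. \<exists>G'\<in>?X. \<forall>t. (G has_real_derivative G' t) (at t)"
  proof
    fix G assume "G \<in> ?X"
    then obtain c F where F: "F \<in> C1D" "G = (\<lambda>t. c * F (a * t + b))" by blast
    obtain F' where F': "F' \<in> C1D" "\<forall>t. (F has_real_derivative F' t) (at t)"
      using C1D_deriv[OF F(1)] by blast
    have "(G has_real_derivative (c * a) * F' (a * t + b)) (at t)" for t
    proof -
      have "((\<lambda>t. F (a * t + b)) has_real_derivative F' (a * t + b) * a) (at t)"
        by (rule DERIV_chain2[OF F'(2)[rule_format]]) (auto intro!: derivative_eq_intros)
      from DERIV_cmult[OF this, of c] show ?thesis unfolding F(2) by (simp add: mult_ac)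
    qed
    then show "\<exists>G'\<in>?X. \<forall>t. (G has_real_derivative G' t) (at t)"
      using F' by (intro bexI[of _ "\<lambda>t. (c * a) * F' (a * t + b)"]) auto
  qed
  ultimately show ?thesis by (rule C1D_coinduct)
qed


definition psiP :: "real poly \<Rightarrow> real \<Rightarrow> real" where
  "psiP P t = (if t > 0 then poly P (1 / t) * exp (- (1 / t)) else 0)"

lemma poly_exp_lim: "((\<lambda>x. poly P x * exp (- x)) \<longlongrightarrow> (0::real)) at_top"
proof -
  have eq: "(\<lambda>x. poly P x * exp (- x)) = (\<lambda>x. \<Sum>i\<le>degree P. coeff P i * (x ^ i / exp x))"
    by (simp add: poly_altdef sum_distrib_right exp_minus divide_inverse mult.assoc)
  show ?thesis unfolding eq
    by (intro tendsto_null_sum tendsto_mult_right_zero tendsto_power_div_exp_0)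
qed

lemma psiP_right: "((\<lambda>h. psiP P h / h) \<longlongrightarrow> 0) (at_right 0)"
proof -
  have lim: "((\<lambda>h. poly (pCons 0 P) (inverse h) * exp (- inverse h)) \<longlongrightarrow> 0) (at_right (0::real))"
    by (rule filterlim_compose[OF poly_exp_lim filterlim_inverse_at_top_right])
  have ev: "\<forall>\<^sub>F h in at_right (0::real). poly (pCons 0 P) (inverse h) * exp (- inverse h) = psiP P h / h"
    using eventually_at_right_less[of "0::real"]
    by eventually_elim (simp add: psiP_def field_simps)
  show ?thesis using tendsto_cong[OF ev] lim by simp
qed

lemma psiP_deriv: "(psiP P has_real_derivative psiP ([:0,0,1:] * (P - pderiv P)) t) (at t)"
proof -
  consider "t > 0" | "t < 0" | "t = 0" by linarith
  then show ?thesis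
  proof cases
    case 1
    have ev: "\<forall>\<^sub>F y in nhds t. psiP P y = poly P (1 / y) * exp (- (1 / y))"
      using eventually_nhds_in_open[of "{0<..}" t] 1
      by (auto elim!: eventually_mono simp: psiP_def)
    have "((\<lambda>y. poly P (1 / y) * exp (- (1 / y))) has_real_derivative
        psiP ([:0,0,1:] * (P - pderiv P)) t) (at t)"
      using 1
      by (auto intro!: derivative_eq_intros DERIV_chain2[OF poly_DERIV]
               simp: psiP_def field_simps power2_eq_square)
    then show ?thesis using DERIV_cong_ev[OF refl ev refl] by simp
  next
    case 2
    have ev: "\<forall>\<^sub>F y in nhds t. psiP P y = 0"
      using eventually_nhds_in_open[of "{..<0}" t] 2
      by (auto elim!: eventually_mono simp: psiP_def)
    have "((\<lambda>y. 0) has_real_derivative psiP ([:0,0,1:] * (P - pderiv P)) t) (at t)"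
      using 2 by (simp add: psiP_def)
    then show ?thesis using DERIV_cong_ev[OF refl ev refl] by simp
  next
    case 3
    have l: "((\<lambda>y. (psiP P y - psiP P 0) / (y - 0)) \<longlongrightarrow> 0) (at_left 0)"
    proof -
      have ev: "\<forall>\<^sub>F h in at_left (0::real). 0 = (psiP P h - psiP P 0) / (h - 0)"
      proof -
        have "eventually (\<lambda>x. x \<in> {-1<..<0}) (at_left (0::real))"
          by (rule eventually_at_left_real) simp
        then show ?thesis by eventually_elim (simp add: psiP_def)
      qed
      show ?thesis using tendsto_cong[OF ev, of 0] by simp
    qed
    have r: "((\<lambda>y. (psiP P y - psiP P 0) / (y - 0)) \<longlongrightarrow> 0) (at_right 0)"
      using psiP_right[of P] by (simp add: psiP_def)
    have "((\<lambda>y. (psiP P y - psiP P 0) / (y - 0)) \<longlongrightarrow> 0) (at 0)"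
      by (rule filterlim_split_at[OF l r])
    then have "(psiP P has_real_derivative 0) (at 0)"
      by (simp add: has_field_derivative_iff)
    then show ?thesis using 3 by (simp add: psiP_def)
  qed
qed

lemma psiP_C1D: "psiP P \<in> C1D"
proof (rule C1D_coinduct[of _ "range psiP"])
  show "psiP P \<in> range psiP" by simp
  show "\<forall>G\<in>range psiP. \<exists>G'\<in>range psiP. \<forall>t. (G has_real_derivative G' t) (at t)"
  proof
    fix G assume "G \<in> range psiP"
    then obtain Q where G: "G = psiP Q" by blast
    show "\<exists>G'\<in>range psiP. \<forall>t. (G has_real_derivative G' t) (at t)"
      unfolding G by (intro bexI[of _ "psiP ([:0,0,1:] * (Q - pderiv Q))"] allI psiP_deriv) simp
  qed
qed

definition psi :: "real \<Rightarrow> real" where "psi = psiP 1"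

lemma psi_C1D: "psi \<in> C1D" unfolding psi_def by (rule psiP_C1D)
lemma psi_pos: "t > 0 \<Longrightarrow> psi t > 0" by (simp add: psi_def psiP_def)
lemma psi_zero: "t \<le> 0 \<Longrightarrow> psi t = 0" by (simp add: psi_def psiP_def)
lemma psi_nonneg: "psi t \<ge> 0" by (simp add: psi_def psiP_def)

definition plat :: "real \<Rightarrow> real \<Rightarrow> real" where
  "plat c t = psi (c - t) * inverse (psi (c - t) + psi (t - 1))"

lemma plat_C1D: assumes "c > 1" shows "plat c \<in> C1D"
proof -
  have a: "(\<lambda>t. psi (c - t)) \<in> C1D"
    using C1D_affine[OF psi_C1D, of "-1" c] by simp
  have b: "(\<lambda>t. psi (t - 1)) \<in> C1D"
    using C1D_affine[OF psi_C1D, of 1 "-1"] by simp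
  have pos: "\<forall>t. psi (c - t) + psi (t - 1) > 0"
  proof
    fix t
    show "psi (c - t) + psi (t - 1) > 0"
    proof (cases "t < c")
      case True then show ?thesis using psi_pos[of "c - t"] psi_nonneg[of "t - 1"] by simp
    next
      case False then show ?thesis using psi_pos[of "t - 1"] psi_nonneg[of "c - t"] assms by simp
    qed
  qed
  have "(\<lambda>t. psi (c - t) * inverse (psi (c - t) + psi (t - 1))) \<in> C1D"
    by (intro C1D_mult a C1D_inverse C1D_add b pos)
  then show ?thesis unfolding plat_def[abs_def] .
qed

lemma plat_one: "t \<le> 1 \<Longrightarrow> c > 1 \<Longrightarrow> plat c t = 1"
  unfolding plat_def using psi_zero[of "t - 1"] psi_pos[of "c - t"] by simp

lemma plat_zero: "t \<ge> c \<Longrightarrow> plat c t = 0"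
  unfolding plat_def using psi_zero[of "c - t"] by simp

lemma plat_nonneg: "plat c t \<ge> 0"
  unfolding plat_def using psi_nonneg[of "c - t"] psi_nonneg[of "t - 1"] by simp

lemma plat_le1: "plat c t \<le> 1"
proof -
  have "psi (c - t) \<le> psi (c - t) + psi (t - 1)" using psi_nonneg[of "t - 1"] by simp
  then show ?thesis unfolding plat_def using psi_nonneg[of "c - t"]
    by (cases "psi (c - t) + psi (t - 1) = 0") (auto simp: field_simps)
qed


inductive_set MS :: "(real^'n::finite \<Rightarrow> real) set" where
  gen: "G \<in> C1D \<Longrightarrow> (\<lambda>x. G (x \<bullet> x)) \<in> MS"
| coord: "(\<lambda>x. x $ i) \<in> MS"
| const: "(\<lambda>x. c) \<in> MS"
| add: "F \<in> MS \<Longrightarrow> G \<in> MS \<Longrightarrow> (\<lambda>x. F x + G x) \<in> MS"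
| mult: "F \<in> MS \<Longrightarrow> G \<in> MS \<Longrightarrow> (\<lambda>x. F x * G x) \<in> MS"

lemma inner_line_deriv:
  fixes x :: "real^'n::finite"
  shows "((\<lambda>t. (x + t *\<^sub>R axis i 1) \<bullet> (x + t *\<^sub>R axis i 1)) has_real_derivative 2 * x $ i) (at 0)"
proof -
  have eq: "(\<lambda>t. (x + t *\<^sub>R axis i 1) \<bullet> (x + t *\<^sub>R axis i 1)) = (\<lambda>t. x \<bullet> x + 2 * t * x $ i + t * t)"
    by (rule ext) (simp add: inner_add_left inner_add_right inner_axis inner_axis' inner_axis_axis algebra_simps)
  show ?thesis unfolding eq by (auto intro!: derivative_eq_intros)
qed

lemma MS_line:
  fixes F :: "real^'n::finite \<Rightarrow> real"
  assumes "F \<in> MS"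
  shows "\<exists>F'\<in>MS. \<forall>x. ((\<lambda>t. F (x + t *\<^sub>R axis i 1)) has_real_derivative F' x) (at 0)"
  using assms
proof (induction rule: MS.induct)
  case (gen G)
  obtain G' where G': "G' \<in> C1D" "\<forall>s. (G has_real_derivative G' s) (at s)"
    using C1D_deriv[OF gen] by blast
  have "((\<lambda>t. G ((x + t *\<^sub>R axis i 1) \<bullet> (x + t *\<^sub>R axis i 1))) has_real_derivative
      G' (x \<bullet> x) * (2 * x $ i)) (at 0)" for x :: "real^'n"
    using DERIV_chain2[OF G'(2)[rule_format, of "(x + 0 *\<^sub>R axis i 1) \<bullet> (x + 0 *\<^sub>R axis i 1)"]
        inner_line_deriv[of x i]] by simp
  moreover have "(\<lambda>x::real^'n. G' (x \<bullet> x) * (2 * x $ i)) \<in> MS"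
    by (intro MS.mult MS.gen G'(1) MS.const MS.coord)
  ultimately show ?case by (intro bexI[of _ "\<lambda>x::real^'n. G' (x \<bullet> x) * (2 * x $ i)"] allI)
next
  case (coord j)
  have "((\<lambda>t. (x + t *\<^sub>R axis i 1) $ j) has_real_derivative axis i 1 $ j) (at 0)" for x :: "real^'n"
    by (auto intro!: derivative_eq_intros)
  then show ?case by (intro bexI[of _ "\<lambda>x::real^'n. axis i 1 $ j"] allI MS.const)
next
  case (const c)
  then show ?case by (intro bexI[of _ "\<lambda>x::real^'n. 0"] allI MS.const) simp
next
  case (add F G)
  then obtain F' G' where d: "F' \<in> MS" "G' \<in> MS"
      "\<forall>x. ((\<lambda>t. F (x + t *\<^sub>R axis i 1)) has_real_derivative F' x) (at 0)"
      "\<forall>x. ((\<lambda>t. G (x + t *\<^sub>R axis i 1)) has_real_derivative G' x) (at 0)" by blast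
  have "((\<lambda>t. F (x + t *\<^sub>R axis i 1) + G (x + t *\<^sub>R axis i 1)) has_real_derivative F' x + G' x) (at 0)"
    for x using DERIV_add[OF d(3)[rule_format, of x] d(4)[rule_format, of x]] by simp
  then show ?case by (intro bexI[of _ "\<lambda>x. F' x + G' x"] allI MS.add d(1) d(2))
next
  case (mult F G)
  then obtain F' G' where d: "F' \<in> MS" "G' \<in> MS"
      "\<forall>x. ((\<lambda>t. F (x + t *\<^sub>R axis i 1)) has_real_derivative F' x) (at 0)"
      "\<forall>x. ((\<lambda>t. G (x + t *\<^sub>R axis i 1)) has_real_derivative G' x) (at 0)" by blast
  have "((\<lambda>t. F (x + t *\<^sub>R axis i 1) * G (x + t *\<^sub>R axis i 1)) has_real_derivative F' x * G x + F x * G' x) (at 0)"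
    for x using DERIV_mult[OF d(3)[rule_format, of x] d(4)[rule_format, of x]] by (simp add: mult.commute)
  moreover have "(\<lambda>x. F' x * G x + F x * G' x) \<in> MS"
    by (intro MS.add MS.mult d(1) d(2) mult.hyps)
  ultimately show ?case by (intro bexI[of _ "\<lambda>x. F' x * G x + F x * G' x"] allI)
qed

lemma MS_partial:
  fixes F :: "real^'n::finite \<Rightarrow> real"
  assumes "F \<in> MS"
  shows "partial_dir i F \<in> MS"
    and "((\<lambda>t. F (x + t *\<^sub>R axis i 1)) has_real_derivative partial_dir i F x) (at 0)"
proof -
  obtain F' where F': "F' \<in> MS" "\<forall>x. ((\<lambda>t. F (x + t *\<^sub>R axis i 1)) has_real_derivative F' x) (at 0)"
    using MS_line[OF assms, of i] by blast
  have eq: "partial_dir i F = F'"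
    by (rule ext) (simp add: partial_dir_def DERIV_imp_deriv[OF F'(2)[rule_format]])
  show "partial_dir i F \<in> MS" using eq F' by simp
  show "((\<lambda>t. F (x + t *\<^sub>R axis i 1)) has_real_derivative partial_dir i F x) (at 0)"
    using eq F' by simp
qed

lemma MS_iter: "F \<in> MS \<Longrightarrow> iter_partial is F \<in> MS"
  by (induction "is") (auto intro: MS_partial)

lemma MS_cont:
  fixes F :: "real^'n::finite \<Rightarrow> real"
  assumes "F \<in> MS" shows "continuous_on UNIV F"
  using assms
proof (induction rule: MS.induct)
  case (gen G)
  have "continuous_on UNIV G" using C1D_cont[OF gen] by (simp add: continuous_at_imp_continuous_on)
  then show ?case by (intro continuous_on_compose2[OF \<open>continuous_on UNIV G\<close>] continuous_intros) auto
qed (auto intro!: continuous_intros)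

lemma MS_smooth: "F \<in> MS \<Longrightarrow> smooth_fun F"
  unfolding smooth_fun_def
proof (intro allI conjI)
  fix "is" assume F: "F \<in> MS"
  show "continuous_on UNIV (iter_partial is F)" by (rule MS_cont[OF MS_iter[OF F]])
next
  fix "is" i x assume F: "F \<in> MS"
  show "(\<lambda>t. iter_partial is F (x + t *\<^sub>R axis i 1)) differentiable at 0"
    using MS_partial(2)[OF MS_iter[OF F], where i=i and x=x] real_differentiable_def by blast
qed

lemma MS_scale:
  fixes F :: "real^'n::finite \<Rightarrow> real"
  assumes "F \<in> MS" shows "(\<lambda>x. F (c *\<^sub>R x)) \<in> MS"
  using assms
proof (induction rule: MS.induct)
  case (gen G)
  have "(\<lambda>s. G ((c * c) * s + 0)) \<in> C1D" by (rule C1D_affine[OF gen])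
  then have "(\<lambda>x::real^'n. (\<lambda>s. G ((c * c) * s + 0)) (x \<bullet> x)) \<in> MS" by (rule MS.gen)
  then show ?case by (simp add: mult.assoc)
next
  case (coord i)
  have "(\<lambda>x::real^'n. c * x $ i) \<in> MS" by (intro MS.mult MS.const MS.coord)
  then show ?case by simp
qed (auto intro: MS.intros)

lemma iter_partial_scale:
  fixes F :: "real^'n::finite \<Rightarrow> real"
  assumes F: "F \<in> MS"
  shows "iter_partial is (\<lambda>x. F (c *\<^sub>R x)) = (\<lambda>x. c ^ length is * iter_partial is F (c *\<^sub>R x))"
proof (induction "is")
  case Nil then show ?case by simp
next
  case (Cons i "is")
  let ?G = "iter_partial is F"
  have G: "?G \<in> MS" by (rule MS_iter[OF F])
  have "partial_dir i (\<lambda>x. c ^ length is * ?G (c *\<^sub>R x)) x = c ^ Suc (length is) * partial_dir i ?G (c *\<^sub>R x)"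
    for x
  proof -
    have d: "((\<lambda>s. ?G (c *\<^sub>R x + s *\<^sub>R axis i 1)) has_real_derivative partial_dir i ?G (c *\<^sub>R x)) (at (c * 0))"
      using MS_partial(2)[OF G, where i=i and x="c *\<^sub>R x"] by simp
    have "((\<lambda>t. (\<lambda>s. ?G (c *\<^sub>R x + s *\<^sub>R axis i 1)) (c * t)) has_real_derivative
        partial_dir i ?G (c *\<^sub>R x) * c) (at 0)"
      by (rule DERIV_chain2[where g="\<lambda>t. c * t" and x=0, OF d]) (auto intro!: derivative_eq_intros)
    from DERIV_cmult[OF this, of "c ^ length is"]
    have "((\<lambda>t. c ^ length is * ?G (c *\<^sub>R (x + t *\<^sub>R axis i 1))) has_real_derivative
        c ^ Suc (length is) * partial_dir i ?G (c *\<^sub>R x)) (at 0)"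
      by (simp add: scaleR_add_right mult_ac)
    then show ?thesis unfolding partial_dir_def by (rule DERIV_imp_deriv)
  qed
  then show ?case using Cons by simp
qed

lemma partial_dir_loc_const:
  fixes F :: "real^'n::finite \<Rightarrow> real"
  assumes U: "open U" "x \<in> U" and k: "\<forall>y\<in>U. F y = k"
  shows "partial_dir i F x = 0"
proof -
  have cont: "continuous (at 0) (\<lambda>t::real. x + t *\<^sub>R axis i 1)"
    by (intro continuous_intros)
  have op: "open ((\<lambda>t::real. x + t *\<^sub>R axis i 1) -` U)"
    by (intro continuous_open_vimage U(1)) (auto intro!: continuous_intros)
  have "\<forall>\<^sub>F t in nhds 0. t \<in> (\<lambda>t::real. x + t *\<^sub>R axis i 1) -` U"
    by (rule eventually_nhds_in_open[OF op]) (simp add: U(2))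
  then have "\<forall>\<^sub>F t in nhds 0. x + t *\<^sub>R axis i 1 \<in> U" by simp
  then have ev: "\<forall>\<^sub>F t in nhds 0. F (x + t *\<^sub>R axis i 1) = k"
    by eventually_elim (use k in auto)
  have "((\<lambda>t. k) has_real_derivative 0) (at 0)" by simp
  then have "((\<lambda>t. F (x + t *\<^sub>R axis i 1)) has_real_derivative 0) (at 0)"
    using DERIV_cong_ev[OF refl ev refl] by simp
  then show ?thesis unfolding partial_dir_def by (rule DERIV_imp_deriv)
qed


definition eta :: "real \<Rightarrow> real^'n::finite \<Rightarrow> real" where
  "eta th y = plat (th\<^sup>2) (y \<bullet> y)"

definition Phi :: "real \<Rightarrow> nat \<Rightarrow> real^'n::finite \<Rightarrow> real" where
  "Phi th s y = eta th y ^ s"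

lemma MS_power: "F \<in> MS \<Longrightarrow> (\<lambda>x. F x ^ k) \<in> MS"
proof (induction k)
  case 0 then show ?case by (simp add: MS.const)
next
  case (Suc k) then show ?case using MS.mult[OF Suc.prems Suc.IH[OF Suc.prems]] by simp
qed

lemma eta_MS: "th > 1 \<Longrightarrow> eta th \<in> MS"
proof -
  assume th: "th > 1"
  then have "th\<^sup>2 > 1" by (simp add: one_less_power)
  then show ?thesis unfolding eta_def[abs_def] by (intro MS.gen plat_C1D)
qed

lemma Phi_MS: "th > 1 \<Longrightarrow> Phi th s \<in> MS"
  unfolding Phi_def[abs_def] by (intro MS_power eta_MS)

lemma eta_nonneg: "eta th y \<ge> 0" by (simp add: eta_def plat_nonneg)
lemma eta_le1: "eta th y \<le> 1" by (simp add: eta_def plat_le1)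

lemma eta_one: assumes "th > 1" "norm y \<le> 1" shows "eta th y = 1"
proof -
  have "y \<bullet> y \<le> 1" using assms(2) by (simp add: power2_norm_eq_inner[symmetric] power_le_one)
  moreover have "th\<^sup>2 > 1" using assms(1) by (simp add: one_less_power)
  ultimately show ?thesis by (simp add: eta_def plat_one)
qed

lemma eta_zero: assumes "th > 0" "norm y \<ge> th" shows "eta th y = 0"
proof -
  have "th\<^sup>2 \<le> (norm y)\<^sup>2" using assms by (intro power_mono) auto
  then have "y \<bullet> y \<ge> th\<^sup>2" by (simp add: power2_norm_eq_inner)
  then show ?thesis by (simp add: eta_def plat_zero)
qed

lemma Phi_factor:
  fixes th :: real and s :: nat
  assumes th: "th > 1"
  shows "length is \<le> s \<Longrightarrow> \<exists>g\<in>(MS :: (real^'n::finite \<Rightarrow> real) set).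
           iter_partial is (Phi th s) = (\<lambda>y. eta th y ^ (s - length is) * g y)"
proof (induction "is")
  case Nil
  have "(\<lambda>y::real^'n. 1) \<in> MS" by (rule MS.const)
  then show ?case by (intro bexI[of _ "\<lambda>y. 1"]) (auto simp: Phi_def[abs_def])
next
  case (Cons i "is")
  then obtain g where g: "g \<in> MS" "iter_partial is (Phi th s) = (\<lambda>y. eta th y ^ (s - length is) * g y)"
    by auto
  define j where "j = s - length is"
  have j: "j \<ge> 1" "s - length (i # is) = j - 1" using Cons.prems by (auto simp: j_def)
  let ?e = "eta th :: real^'n \<Rightarrow> real"
  have e: "?e \<in> MS" by (rule eta_MS[OF th])
  define G where "G = (\<lambda>y. of_nat j * partial_dir i ?e y * g y + ?e y * partial_dir i g y)"
  have GM: "G \<in> MS" unfolding G_def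
    by (intro MS.add MS.mult MS.const MS_partial(1) e g(1))
  have "partial_dir i (\<lambda>y. ?e y ^ j * g y) y = ?e y ^ (j - 1) * G y" for y
  proof -
    have d1: "((\<lambda>t. ?e (y + t *\<^sub>R axis i 1)) has_real_derivative partial_dir i ?e y) (at 0)"
      by (rule MS_partial(2)[OF e])
    have d2: "((\<lambda>t. g (y + t *\<^sub>R axis i 1)) has_real_derivative partial_dir i g y) (at 0)"
      by (rule MS_partial(2)[OF g(1)])
    have "((\<lambda>t. ?e (y + t *\<^sub>R axis i 1) ^ j * g (y + t *\<^sub>R axis i 1)) has_real_derivative
        (of_nat j * (partial_dir i ?e y * ?e y ^ (j - Suc 0))) * g y + partial_dir i g y * ?e y ^ j) (at 0)"
      using DERIV_mult[OF DERIV_power[OF d1, of j] d2] by simp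
    moreover have "(of_nat j * (partial_dir i ?e y * ?e y ^ (j - Suc 0))) * g y + partial_dir i g y * ?e y ^ j
        = ?e y ^ (j - 1) * G y"
    proof -
      have "?e y ^ j = ?e y ^ (j - 1) * ?e y" using j(1)
        by (metis Suc_diff_le diff_Suc_1 le_add_diff_inverse power_Suc2 trans_le_add2 le_refl)
      then show ?thesis by (simp add: G_def algebra_simps)
    qed
    ultimately show ?thesis unfolding partial_dir_def by (intro DERIV_imp_deriv) simp
  qed
  moreover have "iter_partial (i # is) (Phi th s) = partial_dir i (\<lambda>y. ?e y ^ j * g y)"
    using g(2) by (simp add: j_def)
  ultimately have "iter_partial (i # is) (Phi th s) = (\<lambda>y. ?e y ^ (s - length (i # is)) * G y)"
    using j(2) by (simp add: fun_eq_iff)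
  then show ?case using GM by (intro bexI[of _ G])
qed

lemma Phi_bound:
  fixes th lam :: real and s :: nat and "is" :: "'n::finite list"
  assumes th: "th > 1" and lam: "lam > 1" and len: "length is < s"
    and sl: "real s \<le> real (s - length is) * lam"
  shows "\<exists>M\<ge>0. \<forall>y::real^'n. \<bar>iter_partial is (Phi th s) y\<bar> \<le> M * Phi th s y powr (1 / lam)"
proof -
  obtain g where g: "g \<in> MS" "iter_partial is (Phi th s) = (\<lambda>y::real^'n. eta th y ^ (s - length is) * g y)"
    using Phi_factor[OF th, of "is" s] len by auto
  have "continuous_on (cball 0 th) g" using MS_cont[OF g(1)] by (rule continuous_on_subset) simp
  then have "compact (g ` cball 0 th)" by (intro compact_continuous_image) auto
  then obtain M where M: "M > 0" "\<forall>z\<in>g ` cball 0 th. norm z \<le> M"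
    using compact_imp_bounded bounded_pos by metis
  show ?thesis
  proof (intro exI[of _ M] conjI allI)
    show "M \<ge> 0" using M by simp
    fix y :: "real^'n"
    let ?k = "s - length is"
    have k: "?k \<ge> 1" using len by simp
    show "\<bar>iter_partial is (Phi th s) y\<bar> \<le> M * Phi th s y powr (1 / lam)"
    proof (cases "norm y \<ge> th")
      case True
      then have "eta th y = 0" using th by (intro eta_zero) auto
      then show ?thesis using g(2) k M by (simp add: zero_power)
    next
      case False
      then have gy: "\<bar>g y\<bar> \<le> M" using M by auto
      let ?e = "eta th y"
      have e01: "0 \<le> ?e" "?e \<le> 1" by (simp_all add: eta_nonneg eta_le1)
      have "?e ^ ?k \<le> ?e powr (real s / lam)"
      proof (cases "?e = 0")
        case True then show ?thesis using k by (simp add: zero_power)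
      next
        case False
        then have "?e ^ ?k = ?e powr (real ?k)" using e01 by (simp add: powr_realpow)
        also have "\<dots> \<le> ?e powr (real s / lam)"
          using e01 False sl lam by (intro powr_mono') (auto simp: field_simps)
        finally show ?thesis .
      qed
      also have "\<dots> = Phi th s y powr (1 / lam)"
      proof (cases "?e = 0")
        case True then show ?thesis using len by (simp add: Phi_def zero_power)
      next
        case False
        then have "?e ^ s = ?e powr (real s)" using e01 by (simp add: powr_realpow)
        then show ?thesis by (simp add: Phi_def powr_powr)
      qed
      finally have "?e ^ ?k \<le> Phi th s y powr (1 / lam)" .
      then have "\<bar>g y\<bar> * ?e ^ ?k \<le> M * Phi th s y powr (1 / lam)"
        using gy e01 by (intro mult_mono) auto
      then show ?thesis using g(2) e01 by (simp add: abs_mult mult.commute)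
    qed
  qed
qed

lemma Phi_zero_inner:
  fixes th :: real and s :: nat and "is" :: "'n::finite list"
  assumes th: "th > 1" and ne: "is \<noteq> []" and y: "norm (y::real^'n) \<le> 1"
  shows "iter_partial is (Phi th s) y = 0"
proof -
  have ball: "\<forall>z\<in>ball (0::real^'n) 1. iter_partial is (Phi th s) z = 0" if "is \<noteq> []" for "is"
    using that
  proof (induction "is")
    case Nil then show ?case by simp
  next
    case (Cons i "is")
    show ?case
    proof
      fix z :: "real^'n" assume z: "z \<in> ball 0 1"
      show "iter_partial (i # is) (Phi th s) z = 0"
      proof (cases "is = []")
        case True
        have "\<forall>w\<in>ball (0::real^'n) 1. Phi th s w = 1"
          using th by (auto simp: Phi_def eta_one)
        then show ?thesis using True z by (simp, intro partial_dir_loc_const[where U="ball 0 1" and k=1]) auto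
      next
        case False
        then show ?thesis using Cons.IH z by (simp, intro partial_dir_loc_const[where U="ball 0 1" and k=0]) auto
      qed
    qed
  qed
  have cl: "closed {z \<in> UNIV. iter_partial is (Phi th s) z = (0::real)}"
    by (intro continuous_closed_preimage_constant MS_cont MS_iter Phi_MS th) simp
  have "cball (0::real^'n) 1 \<subseteq> {z \<in> UNIV. iter_partial is (Phi th s) z = 0}"
    using closure_minimal[OF _ cl, of "ball 0 1"] ball[OF ne] by auto
  then show ?thesis using y by auto
qed


definition phiR :: "real \<Rightarrow> nat \<Rightarrow> real \<Rightarrow> real^'n::finite \<Rightarrow> real" where
  "phiR th s R x = Phi th s ((1 / R) *\<^sub>R x)"

lemma Phi_nonneg: "Phi th s y \<ge> 0" by (simp add: Phi_def eta_nonneg)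
lemma Phi_le1: "Phi th s y \<le> 1" by (simp add: Phi_def eta_nonneg eta_le1 power_le_one)

lemma phiR_nonneg: "phiR th s R x \<ge> 0" by (simp add: phiR_def Phi_nonneg)
lemma phiR_le1: "phiR th s R x \<le> 1" by (simp add: phiR_def Phi_le1)

lemma phiR_one: assumes "th > 1" "R > 0" "norm x \<le> R" shows "phiR th s R x = 1"
  using assms by (simp add: phiR_def Phi_def eta_one field_simps)

lemma phiR_zero: assumes "th > 1" "R > 0" "norm x \<ge> th * R" "s > 0" shows "phiR th s R x = 0"
proof -
  have "norm ((1 / R) *\<^sub>R x) \<ge> th" using assms by (simp add: field_simps)
  then show ?thesis using assms by (simp add: phiR_def Phi_def eta_zero zero_power)
qed

lemma phiR_test:
  assumes th: "th > 1" and R: "R > 0" and s: "s > 0"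
  shows "test_fun (phiR th s R :: real^'n::finite \<Rightarrow> real)"
proof -
  have "(\<lambda>x::real^'n. Phi th s ((1 / R) *\<^sub>R x)) \<in> MS" by (intro MS_scale Phi_MS th)
  then have sm: "smooth_fun (phiR th s R :: real^'n \<Rightarrow> real)"
    unfolding phiR_def[abs_def] by (rule MS_smooth)
  have sub: "{x::real^'n. phiR th s R x \<noteq> 0} \<subseteq> cball 0 (th * R)"
  proof
    fix x :: "real^'n" assume "x \<in> {x. phiR th s R x \<noteq> 0}"
    then have "\<not> norm x \<ge> th * R" using phiR_zero[OF th R _ s, of x] by auto
    then show "x \<in> cball 0 (th * R)" by simp
  qed
  have "closure {x::real^'n. phiR th s R x \<noteq> 0} \<subseteq> cball 0 (th * R)"
    by (rule closure_minimal[OF sub]) simp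
  then have "compact (closure {x::real^'n. phiR th s R x \<noteq> 0})"
    unfolding compact_eq_bounded_closed by (auto intro: bounded_subset[OF bounded_cball])
  then show ?thesis using sm by (simp add: test_fun_def)
qed

lemma multi_list:
  fixes \<alpha> :: "'n::finite \<Rightarrow> nat"
  shows "\<exists>xs. \<forall>i. count_list xs i = \<alpha> i"
proof -
  have "finite {x. \<alpha> x > 0}" by simp
  then have c: "count (Abs_multiset \<alpha>) = \<alpha>" by (rule count_Abs_multiset)
  obtain xs where "mset xs = Abs_multiset \<alpha>" using ex_mset by blast
  then have "\<forall>i. count_list xs i = \<alpha> i" using c by (metis count_mset)
  then show ?thesis by blast
qed

lemma dpartial_list:
  fixes \<alpha> :: "'n::finite \<Rightarrow> nat"
  assumes "\<alpha> \<in> multi_indices m"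
  shows "\<exists>xs. length xs = m \<and> (\<forall>F. dpartial \<alpha> F = iter_partial xs F)"
proof -
  let ?xs = "SOME xs. \<forall>i. count_list xs i = \<alpha> i"
  have c: "\<forall>i. count_list ?xs i = \<alpha> i" using someI_ex[OF multi_list[of \<alpha>]] .
  have "length ?xs = sum (count_list ?xs) UNIV" by (rule sum_count_set[symmetric]) auto
  also have "\<dots> = m" using c assms by (simp add: multi_indices_def)
  finally show ?thesis by (intro exI[of _ ?xs]) (simp add: dpartial_def)
qed

lemma dpartial_bound:
  fixes \<alpha> :: "'n::finite \<Rightarrow> nat" and th lam :: real and s m :: nat
  assumes \<alpha>: "\<alpha> \<in> multi_indices m" and m: "m \<ge> 1" and th: "th > 1" and lam: "lam > 1"
    and sm: "m < s" and sl: "real s \<le> real (s - m) * lam"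
  shows "\<exists>M\<ge>0. \<forall>R>0. \<forall>x::real^'n. \<bar>dpartial \<alpha> (phiR th s R) x\<bar> \<le>
     M * (1 / R) ^ m * phiR th s R x powr (1 / lam) * indicator (cball 0 (th * R) - cball 0 R) x"
proof -
  obtain xs where xs: "length xs = m" "\<forall>F. dpartial \<alpha> F = iter_partial xs F"
    using dpartial_list[OF \<alpha>] by blast
  obtain M where M: "M \<ge> 0" "\<forall>y::real^'n. \<bar>iter_partial xs (Phi th s) y\<bar> \<le> M * Phi th s y powr (1 / lam)"
    using Phi_bound[OF th lam, of xs s] xs sm sl by auto
  have ne: "xs \<noteq> []" using xs m by auto
  show ?thesis
  proof (intro exI[of _ M] conjI allI impI)
    show "M \<ge> 0" by fact
    fix R :: real and x :: "real^'n" assume R: "R > 0"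
    have eq: "dpartial \<alpha> (phiR th s R) x = (1 / R) ^ m * iter_partial xs (Phi th s) ((1 / R) *\<^sub>R x)"
      using xs by (simp add: phiR_def[abs_def] iter_partial_scale[OF Phi_MS[OF th]])
    have bnd: "\<bar>dpartial \<alpha> (phiR th s R) x\<bar> \<le> M * (1 / R) ^ m * phiR th s R x powr (1 / lam)"
      using M(2)[rule_format, of "(1 / R) *\<^sub>R x"] R unfolding eq
      by (simp add: abs_mult phiR_def mult_ac mult_left_mono)
    show "\<bar>dpartial \<alpha> (phiR th s R) x\<bar> \<le>
     M * (1 / R) ^ m * phiR th s R x powr (1 / lam) * indicator (cball 0 (th * R) - cball 0 R) x"
    proof (cases "x \<in> cball 0 (th * R) - cball 0 R")
      case True then show ?thesis using bnd by simp
    next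
      case False
      then consider "norm x \<le> R" | "norm x > th * R" by (auto simp: not_le)
      then show ?thesis
      proof cases
        case 1
        then have "norm ((1 / R) *\<^sub>R x) \<le> 1" using R by (simp add: field_simps)
        then show ?thesis unfolding eq using Phi_zero_inner[OF th ne] M(1) R
          by (simp add: indicator_def)
      next
        case 2
        then have "phiR th s R x = 0" using phiR_zero[OF th R, of x s] sm by simp
        then show ?thesis using bnd False lam by simp
      qed
    qed
  qed
qed


lemma young_pt:
  fixes a v p b c e lam :: real
  assumes a: "a \<ge> 0" and v: "v \<ge> 0" and p: "p \<ge> 0" and b: "b > 0" and c: "c > 0" and e: "e > 0"
    and lam: "lam > 1" and ab: "a powr lam * c \<le> b"
  shows "a * v * p powr (1 / lam) \<le> e * (b * v powr lam) * p + (e * c) powr (- 1 / (lam - 1))"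
proof -
  define Z where "Z = a * v * p powr (1 / lam)"
  define T where "T = (e * c) powr (- 1 / (lam - 1))"
  have Z0: "Z \<ge> 0" using a v p by (simp add: Z_def)
  have T0: "T > 0" using e c by (simp add: T_def)
  have rhs1: "e * (b * v powr lam) * p \<ge> 0" using e b v p by simp
  have Zl: "Z powr lam = a powr lam * v powr lam * p"
    using a v p lam by (simp add: Z_def powr_mult powr_powr)
  have "e * c * Z powr lam \<le> e * (b * v powr lam) * p"
  proof -
    have "e * c * Z powr lam = e * (a powr lam * c) * v powr lam * p" by (simp add: Zl mult_ac)
    also have "\<dots> \<le> e * b * v powr lam * p"
      using ab e v p by (intro mult_right_mono mult_left_mono) auto
    finally show ?thesis by (simp add: mult_ac)
  qed
  show ?thesis
  proof (cases "Z \<le> T")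
    case True then show ?thesis using rhs1 unfolding Z_def T_def by linarith
  next
    case False
    then have ZT: "Z > T" by simp
    then have Zp: "Z > 0" using T0 by simp
    have ex: "- 1 / (lam - 1) * (lam - 1) = -1" using lam by simp
    have "T powr (lam - 1) = (e * c) powr (-1)"
      unfolding T_def powr_powr ex ..
    also have "\<dots> = 1 / (e * c)" using e c by (simp add: powr_minus divide_simps)
    finally have "T powr (lam - 1) = 1 / (e * c)" .
    moreover have "T powr (lam - 1) < Z powr (lam - 1)"
      using ZT T0 lam by (intro powr_less_mono2) auto
    ultimately have "e * c * T powr (lam - 1) < e * c * Z powr (lam - 1)"
      using e c by (intro mult_strict_left_mono) auto
    moreover have "e * c * T powr (lam - 1) = 1" using \<open>T powr (lam - 1) = 1 / (e * c)\<close> e c by simp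
    ultimately have "1 < e * c * Z powr (lam - 1)" by simp
    then have "Z < e * c * Z powr (lam - 1) * Z" using Zp by simp
    also have "e * c * Z powr (lam - 1) * Z = e * c * Z powr lam"
      using Zp by (simp add: powr_diff field_simps)
    finally have "Z < e * (b * v powr lam) * p" using \<open>e * c * Z powr lam \<le> _\<close> by simp
    then show ?thesis using T0 unfolding Z_def T_def by linarith
  qed
qed

lemma young_choice:
  fixes k W c lam J L I D :: real
  assumes k: "k > 0" and W: "W > 0" and c: "c > 0" and lam: "lam > 1"
    and J: "J \<ge> 0" and JL: "J \<le> L" and IL: "I \<le> L" and ID: "I \<le> D" and I0: "I \<ge> 0"
    and H: "\<And>e. e > 0 \<Longrightarrow> L \<le> k * e * I + k * (e * c) powr (- 1 / (lam - 1)) * W"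
  shows "c * J powr (lam - 1) \<le> (2 * k) powr lam * W powr (lam - 1)"
    and "J > 0 \<Longrightarrow> c * J powr lam \<le> (2 * k) powr lam * W powr (lam - 1) * D"
proof -
  define q where "q = 1 / (lam - 1)"
  have q: "q > 0" using lam by (simp add: q_def)
  have mq: "- 1 / (lam - 1) = - q" by (simp add: q_def)
  have qlam: "q * (lam - 1) = 1" using lam by (simp add: q_def)
  show "c * J powr (lam - 1) \<le> (2 * k) powr lam * W powr (lam - 1)"
  proof (cases "J = 0")
    case True
    then show ?thesis using lam k W by simp
  next
    case False
    then have Jp: "J > 0" using J by simp
    have "L \<le> k * (1 / (2 * k)) * I + k * ((1 / (2 * k)) * c) powr (- q) * W"
      using H[of "1 / (2 * k)"] k by (simp add: q_def)
    also have "((1 / (2 * k)) * c) powr (- q) = (2 * k / c) powr q"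
      using k c by (simp add: powr_minus_divide powr_divide divide_simps)
    finally have "L \<le> I / 2 + k * (2 * k / c) powr q * W" using k by simp
    then have "J \<le> 2 * k * (2 * k / c) powr q * W" using JL IL by simp
    then have "J powr (lam - 1) \<le> (2 * k * (2 * k / c) powr q * W) powr (lam - 1)"
      using Jp lam by (intro powr_mono2) auto
    also have "\<dots> = (2 * k) powr (lam - 1) * ((2 * k / c) powr q) powr (lam - 1) * W powr (lam - 1)"
      using k c W by (simp add: powr_mult)
    also have "((2 * k / c) powr q) powr (lam - 1) = 2 * k / c"
      using k c by (simp add: powr_powr qlam)
    finally have "J powr (lam - 1) \<le> (2 * k) powr (lam - 1) * (2 * k / c) * W powr (lam - 1)" .
    then have "c * J powr (lam - 1) \<le> c * ((2 * k) powr (lam - 1) * (2 * k / c) * W powr (lam - 1))"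
      by (rule mult_left_mono) (use c in auto)
    also have "\<dots> = (2 * k) powr (lam - 1) * (2 * k) * W powr (lam - 1)" using c by simp
    also have "(2 * k) powr (lam - 1) * (2 * k) = (2 * k) powr lam"
      using k by (simp add: powr_diff)
    finally show ?thesis by simp
  qed
  assume Jp: "J > 0"
  define e where "e = (2 * k * W / J) powr (lam - 1) / c"
  have e: "e > 0" using k W Jp c by (simp add: e_def)
  have ec: "e * c = (2 * k * W / J) powr (lam - 1)" using c by (simp add: e_def)
  have ex: "(lam - 1) * (- q) = -1" using qlam by (simp add: mult.commute)
  have "(e * c) powr (- q) = (2 * k * W / J) powr (-1)"
    unfolding ec powr_powr ex ..
  also have "\<dots> = J / (2 * k * W)" using k W Jp by (simp add: powr_minus_divide)
  finally have ecq: "(e * c) powr (- q) = J / (2 * k * W)" .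
  have "L \<le> k * e * I + k * (e * c) powr (- q) * W" using H[OF e] by (simp add: q_def)
  also have "k * (e * c) powr (- q) * W = J / 2" unfolding ecq using k W by simp
  finally have L1: "L \<le> k * e * I + J / 2" .
  have "k * e * I \<le> k * e * D" using ID k e by (intro mult_left_mono) auto
  then have JD: "J / 2 \<le> k * e * D" using JL L1 by linarith
  have "c * J \<le> c * (2 * k * e * D)" using JD c by (intro mult_left_mono) auto
  also have "c * (2 * k * e * D) = (2 * k) * (e * c) * D" by (simp add: mult_ac)
  also have "\<dots> = (2 * k) * ((2 * k) powr (lam - 1) * W powr (lam - 1) / J powr (lam - 1)) * D"
    unfolding ec using k W Jp by (simp add: powr_mult powr_divide)
  also have "\<dots> = ((2 * k) * (2 * k) powr (lam - 1) * W powr (lam - 1) * D) / J powr (lam - 1)"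
    by simp
  finally have fin: "c * J * J powr (lam - 1) \<le> (2 * k) * (2 * k) powr (lam - 1) * W powr (lam - 1) * D"
    using Jp by (simp add: pos_le_divide_eq)
  have e1: "J * J powr (lam - 1) = J powr lam" using Jp by (simp add: powr_diff)
  have e2: "(2 * k) * (2 * k) powr (lam - 1) = (2 * k) powr lam" using k by (simp add: powr_diff)
  have "c * J powr lam = c * J * J powr (lam - 1)" unfolding e1[symmetric] by (simp add: mult.assoc)
  also have "\<dots> \<le> (2 * k) * (2 * k) powr (lam - 1) * W powr (lam - 1) * D" by (rule fin)
  also have "\<dots> = (2 * k) powr lam * W powr (lam - 1) * D" unfolding e2 ..
  finally show "c * J powr lam \<le> (2 * k) powr lam * W powr (lam - 1) * D" .
qed

lemma tele:
  fixes x y P C lam :: real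
  assumes x: "x > 0" and xy: "x \<le> y" and lam: "lam > 1" and C: "C \<ge> 0"
    and h1: "P * x powr (lam - 1) \<le> C" and h2: "P * x powr lam \<le> C * (y - x)"
  shows "P \<le> C * (2 powr lam / (lam - 1) + 1 / (1 - 2 powr (1 - lam))) * (x powr (1 - lam) - y powr (1 - lam))"
proof -
  define g where "g t = t powr (1 - lam)" for t :: real
  define K1 where "K1 = 2 powr lam / (lam - 1)"
  define K2 where "K2 = 1 / (1 - 2 powr (1 - lam))"
  have two: "2 powr (1 - lam) < 1" using lam by (simp add: powr_less_one)
  have K1: "K1 > 0" using lam by (simp add: K1_def)
  have K2: "K2 > 0" using two by (simp add: K2_def)
  have gdec: "g y \<le> g x" using x xy lam unfolding g_def by (intro powr_mono2') auto
  have Cg: "C * (g x - g y) \<ge> 0" using C gdec by simp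
  have "P \<le> C * K1 * (g x - g y) \<or> P \<le> C * K2 * (g x - g y)"
  proof (cases "y \<le> 2 * x")
    case True
    show ?thesis
    proof (cases "x = y")
      case True
      then have "P * x powr lam \<le> 0" using h2 by simp
      then have "P \<le> 0" using x by (simp add: mult_le_0_iff)
      then show ?thesis using True by simp
    next
      case False
      then have xy': "x < y" using xy by simp
      have der: "(g has_real_derivative (1 - lam) * t powr (- lam)) (at t)" if "x \<le> t" "t \<le> y" for t
        using has_real_derivative_powr[of t "1 - lam"] x that unfolding g_def by simp
      obtain z where z: "x < z" "z < y" "g y - g x = (y - x) * ((1 - lam) * z powr (- lam))"
        using MVT2[OF xy' der] by blast
      have zp: "z > 0" using z x by simp
      have "z powr (- lam) \<ge> y powr (- lam)" using z zp lam by (intro powr_mono2') auto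
      moreover have "y powr (- lam) \<ge> (2 * x) powr (- lam)" using True x xy lam by (intro powr_mono2') auto
      moreover have "(2 * x) powr (- lam) = x powr (- lam) / 2 powr lam"
        using x by (simp add: powr_mult powr_minus divide_simps)
      ultimately have zb: "z powr (- lam) \<ge> x powr (- lam) / 2 powr lam" by simp
      have gxy: "g x - g y = (y - x) * (lam - 1) * z powr (- lam)" using z(3) by (simp add: algebra_simps)
      have "(y - x) * (lam - 1) * (x powr (- lam) / 2 powr lam) \<le> g x - g y"
        unfolding gxy using xy lam zb by (intro mult_left_mono) auto
      then have "(y - x) * x powr (- lam) \<le> K1 * (g x - g y)"
        using lam by (simp add: K1_def field_simps)
      moreover have "P \<le> C * ((y - x) * x powr (- lam))"
      proof -
        have "P * x powr lam * x powr (- lam) \<le> C * (y - x) * x powr (- lam)"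
          using h2 x by (intro mult_right_mono) auto
        then show ?thesis using x by (simp add: powr_minus field_simps)
      qed
      ultimately have "P \<le> C * (K1 * (g x - g y))" using C by (meson mult_left_mono order_trans)
      then show ?thesis by (simp add: mult_ac)
    qed
  next
    case False
    then have "g y \<le> g (2 * x)" using x lam unfolding g_def by (intro powr_mono2') auto
    also have "g (2 * x) = 2 powr (1 - lam) * g x" using x by (simp add: g_def powr_mult)
    finally have "g x * (1 - 2 powr (1 - lam)) \<le> g x - g y" by (simp add: algebra_simps)
    then have gx: "g x \<le> K2 * (g x - g y)" using two by (simp add: K2_def field_simps)
    have "P \<le> C * g x"
    proof -
      have "P * x powr (lam - 1) * g x \<le> C * g x" using h1 x by (intro mult_right_mono) (auto simp: g_def)
      moreover have "x powr (lam - 1) * g x = 1" using x by (simp add: g_def powr_add[symmetric])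
      ultimately show ?thesis by (simp add: mult.assoc)
    qed
    also have "\<dots> \<le> C * (K2 * (g x - g y))" using gx C by (intro mult_left_mono) auto
    finally show ?thesis by (simp add: mult_ac)
  qed
  moreover have "C * (K1 + K2) * (g x - g y) = C * K1 * (g x - g y) + K2 * (C * (g x - g y))"
    by (simp add: algebra_simps)
  moreover have "C * (K1 + K2) * (g x - g y) = C * K2 * (g x - g y) + K1 * (C * (g x - g y))"
    by (simp add: algebra_simps)
  moreover have "K2 * (C * (g x - g y)) \<ge> 0" using Cg K2 by simp
  moreover have "K1 * (C * (g x - g y)) \<ge> 0" using Cg K1 by simp
  ultimately show ?thesis unfolding g_def K1_def K2_def by linarith
qed


locale setting =
  fixes m :: nat and lam :: real
    and A :: "('n::finite \<Rightarrow> nat) \<Rightarrow> real^'n \<Rightarrow> real \<Rightarrow> real"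
    and a b f u :: "real^'n \<Rightarrow> real"
    and th :: real and s :: nat
  assumes m: "m \<ge> 1" and lam: "lam > 1"
    and b_pos: "\<forall>x. b x > 0"
    and a_nonneg: "\<forall>x. a x \<ge> 0"
    and A_bound: "AE x in lborel. \<forall>\<zeta>. \<forall>\<alpha>\<in>multi_indices m. \<bar>A \<alpha> x \<zeta>\<bar> \<le> a x * \<bar>\<zeta>\<bar>"
    and b_ge: "AE x in lborel. b x \<ge> a x powr lam * f x"
    and sol: "is_solution m A b lam u"
    and th: "th > 1" and s: "m < s" "real s \<le> real (s - m) * lam"
begin

definition w :: "real^'n \<Rightarrow> real" where "w x = b x * \<bar>u x\<bar> powr lam"

lemma w_nonneg: "0 \<le> w x" using b_pos by (simp add: w_def less_imp_le)

lemma w_int: assumes "compact K" shows "integrable lborel (\<lambda>x. indicator K x * w x)"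
  using sol assms unfolding is_solution_def loc_integrable_def set_integrable_def w_def by simp

definition J :: "real \<Rightarrow> real" where "J r = (\<integral>x. indicator (cball 0 r) x * w x \<partial>lborel)"

lemma J_nonneg: "J r \<ge> 0"
  unfolding J_def by (rule Bochner_Integration.integral_nonneg) (simp add: w_nonneg)

lemma J_mono: assumes "r \<le> r'" shows "J r \<le> J r'"
  unfolding J_def
proof (rule Bochner_Integration.integral_mono[OF w_int w_int])
  fix x
  show "indicator (cball 0 r) x * w x \<le> indicator (cball 0 r') x * w x"
    using assms w_nonneg[of x] by (auto simp: indicator_def)
qed simp_all

definition phi :: "real \<Rightarrow> real^'n \<Rightarrow> real" where "phi R = phiR th s R"

definition Ma :: "('n \<Rightarrow> nat) \<Rightarrow> real" where
  "Ma \<alpha> = (SOME M. M \<ge> 0 \<and> (\<forall>R>0. \<forall>x. \<bar>dpartial \<alpha> (phi R) x\<bar> \<le>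
     M * (1 / R) ^ m * phi R x powr (1 / lam) * indicator (cball 0 (th * R) - cball 0 R) x))"

lemma Ma: assumes "\<alpha> \<in> multi_indices m"
  shows "Ma \<alpha> \<ge> 0 \<and> (\<forall>R>0. \<forall>x. \<bar>dpartial \<alpha> (phi R) x\<bar> \<le>
     Ma \<alpha> * (1 / R) ^ m * phi R x powr (1 / lam) * indicator (cball 0 (th * R) - cball 0 R) x)"
  unfolding Ma_def phi_def
  by (rule someI_ex) (rule dpartial_bound[OF assms m th lam s])

definition Mt :: real where "Mt = 1 + (\<Sum>\<alpha>\<in>multi_indices m. Ma \<alpha>)"

lemma Mt_pos: "Mt > 0"
proof -
  have "(\<Sum>\<alpha>\<in>multi_indices m. Ma \<alpha>) \<ge> 0" by (intro sum_nonneg) (use Ma in blast)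
  then show ?thesis by (simp add: Mt_def)
qed

lemma deriv_sum_bound:
  assumes R: "R > 0" and Ax: "\<forall>\<zeta>. \<forall>\<alpha>\<in>multi_indices m. \<bar>A \<alpha> x \<zeta>\<bar> \<le> a x * \<bar>\<zeta>\<bar>"
  shows "(\<Sum>\<alpha>\<in>multi_indices m. A \<alpha> x (u x) * dpartial \<alpha> (phi R) x) \<le>
    Mt * ((1 / R) ^ m * indicator (cball 0 (th * R) - cball 0 R) x * (a x * \<bar>u x\<bar> * phi R x powr (1 / lam)))"
proof -
  define X where "X = (1 / R) ^ m * indicator (cball 0 (th * R) - cball 0 R) x * (a x * \<bar>u x\<bar> * phi R x powr (1 / lam))"
  have X0: "X \<ge> 0" using R a_nonneg by (simp add: X_def)
  have "(\<Sum>\<alpha>\<in>multi_indices m. A \<alpha> x (u x) * dpartial \<alpha> (phi R) x) \<le> (\<Sum>\<alpha>\<in>multi_indices m. Ma \<alpha> * X)"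
  proof (rule sum_mono)
    fix \<alpha> :: "'n \<Rightarrow> nat" assume \<alpha>: "\<alpha> \<in> multi_indices m"
    have "A \<alpha> x (u x) * dpartial \<alpha> (phi R) x \<le> \<bar>A \<alpha> x (u x)\<bar> * \<bar>dpartial \<alpha> (phi R) x\<bar>"
      by (simp add: abs_mult[symmetric])
    also have "\<dots> \<le> (a x * \<bar>u x\<bar>) * (Ma \<alpha> * (1 / R) ^ m * phi R x powr (1 / lam) * indicator (cball 0 (th * R) - cball 0 R) x)"
      using Ax \<alpha> Ma[OF \<alpha>] R a_nonneg by (intro mult_mono) auto
    also have "\<dots> = Ma \<alpha> * X" by (simp add: X_def mult_ac)
    finally show "A \<alpha> x (u x) * dpartial \<alpha> (phi R) x \<le> Ma \<alpha> * X" .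
  qed
  also have "\<dots> = (\<Sum>\<alpha>\<in>multi_indices m. Ma \<alpha>) * X" by (simp add: sum_distrib_right)
  also have "\<dots> \<le> Mt * X" using X0 by (intro mult_right_mono) (auto simp: Mt_def)
  finally show ?thesis by (simp add: X_def)
qed

lemma phi_props:
  assumes R: "R > 0"
  shows "phi R x \<ge> 0" "phi R x \<le> 1" "norm x \<le> R \<Longrightarrow> phi R x = 1"
    "norm x \<ge> th * R \<Longrightarrow> phi R x = 0" "test_fun (phi R)"
    "phi R \<in> borel_measurable lborel"
proof -
  show "phi R x \<ge> 0" "phi R x \<le> 1" by (simp_all add: phi_def phiR_nonneg phiR_le1)
  show "norm x \<le> R \<Longrightarrow> phi R x = 1" using phiR_one[OF th R] by (simp add: phi_def)
  show "norm x \<ge> th * R \<Longrightarrow> phi R x = 0" using phiR_zero[OF th R, of x s] s by (simp add: phi_def)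
  show "test_fun (phi R)" unfolding phi_def by (rule phiR_test[OF th R]) (use s in simp)
  have "(\<lambda>x::real^'n. Phi th s ((1 / R) *\<^sub>R x)) \<in> MS" by (intro MS_scale Phi_MS th)
  then have "continuous_on UNIV (phi R)" unfolding phi_def phiR_def[abs_def] by (rule MS_cont)
  then show "phi R \<in> borel_measurable lborel" by (simp add: borel_measurable_continuous_onI)
qed

lemma main_step:
  assumes R: "R > 0" and c: "c > 0"
    and fc: "AE x in lborel. x \<in> cball 0 (th * R) - cball 0 R \<longrightarrow> c \<le> f x"
  shows "c * J R powr (lam - 1) \<le> (2 * (Mt * (1 / R) ^ m)) powr lam
           * (measure lborel (ball (0::real^'n) 1) * (th * R) ^ CARD('n)) powr (lam - 1)"
    and "J R > 0 \<Longrightarrow> c * J R powr lam \<le> (2 * (Mt * (1 / R) ^ m)) powr lam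
           * (measure lborel (ball (0::real^'n) 1) * (th * R) ^ CARD('n)) powr (lam - 1) * (J (th * R) - J R)"
proof -
  define k where "k = Mt * (1 / R) ^ m"
  define W0 where "W0 = measure lborel (ball (0::real^'n) 1) * (th * R) ^ CARD('n)"
  define D where "D = cball (0::real^'n) (th * R) - cball 0 R"
  define K where "K = cball (0::real^'n) (th * R)"
  define L where "L = (\<integral>x. w x * phi R x \<partial>lborel)"
  define I where "I = (\<integral>x. indicator D x * w x * phi R x \<partial>lborel)"
  have k: "k > 0" using Mt_pos R by (simp add: k_def)
  have W: "W0 > 0" using th R content_ball_pos[of 1 "0::real^'n"] by (simp add: W0_def)
  have Dsets: "D \<in> sets lborel" unfolding D_def by simp
  have Ksets: "K \<in> sets lborel" unfolding K_def by simp
  have intK: "integrable lborel (\<lambda>x. indicator K x * w x)" unfolding K_def by (rule w_int) simp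
  have phi0: "phi R x = 0" if "x \<notin> K" for x
    using that phi_props(4)[OF R, of x] by (simp add: K_def)
  have wphi: "w x * phi R x = indicator K x * w x * phi R x" for x
    using phi0[of x] by (cases "x \<in> K") auto
  have phimeas: "phi R \<in> borel_measurable lborel" by (rule phi_props(6)[OF R])
  have intL: "integrable lborel (\<lambda>x. w x * phi R x)"
  proof (rule Bochner_Integration.integrable_bound[OF intK])
    have "(\<lambda>x. indicator K x * w x * phi R x) \<in> borel_measurable lborel"
      using borel_measurable_integrable[OF intK] phimeas by measurable
    then show "(\<lambda>x. w x * phi R x) \<in> borel_measurable lborel" by (subst wphi) simp
    show "AE x in lborel. norm (w x * phi R x) \<le> norm (indicator K x * w x)"
    proof (rule AE_I2)
      fix x
      have "\<bar>indicator K x * w x * phi R x\<bar> \<le> \<bar>indicator K x * w x\<bar>"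
        using phi_props(1,2)[OF R, of x] by (simp add: abs_mult mult_left_le)
      then show "norm (w x * phi R x) \<le> norm (indicator K x * w x)" by (subst wphi) simp
    qed
  qed
  have intI: "integrable lborel (\<lambda>x. indicator D x * w x * phi R x)"
    using integrable_mult_indicator[OF Dsets intL] by (simp add: mult.assoc)
  have DK: "D \<subseteq> K" by (auto simp: D_def K_def)
  have finK: "emeasure lborel K < \<infinity>" unfolding K_def by (rule emeasure_lborel_cball_finite)
  have finD: "emeasure lborel D < \<infinity>"
    using emeasure_mono[OF DK Ksets] finK by (simp add: top.not_eq_extremum le_less_trans)
  have intD: "integrable lborel (indicator D :: real^'n \<Rightarrow> real)"
    by (rule integrable_real_indicator[OF Dsets finD])
  have measD: "measure lborel D \<le> W0"
  proof -
    have "measure lborel D \<le> measure lborel K"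
      using DK Dsets Ksets finK by (intro measure_mono_fmeasurable) (auto simp: fmeasurable_def)
    also have "measure lborel K = measure lborel (ball (0::real^'n) (th * R))"
      unfolding K_def by (rule content_cball_conv_ball)
    also have "\<dots> = (th * R) ^ CARD('n) * measure lborel (ball (0::real^'n) 1)"
      using th R by (subst content_ball_conv_unit_ball) auto
    finally show ?thesis by (simp add: W0_def mult.commute)
  qed
  have sol_ineq: "L \<le> (\<integral>x. (\<Sum>\<alpha>\<in>multi_indices m. A \<alpha> x (u x) * dpartial \<alpha> (phi R) x) \<partial>lborel)"
    using sol phi_props(1,5)[OF R] unfolding is_solution_def L_def w_def by blast
  have key: "L \<le> k * e * I + k * (e * c) powr (- 1 / (lam - 1)) * W0" if e: "e > 0" for e
  proof -
    define T where "T = (e * c) powr (- 1 / (lam - 1))"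
    have T0: "T \<ge> 0" by (simp add: T_def)
    define G where "G x = k * e * (indicator D x * w x * phi R x) + k * T * indicator D x" for x
    have AEb: "AE x in lborel. (\<Sum>\<alpha>\<in>multi_indices m. A \<alpha> x (u x) * dpartial \<alpha> (phi R) x) \<le> G x"
      using A_bound b_ge fc
    proof eventually_elim
      case (elim x)
      have 1: "(\<Sum>\<alpha>\<in>multi_indices m. A \<alpha> x (u x) * dpartial \<alpha> (phi R) x) \<le>
          Mt * ((1 / R) ^ m * indicator D x * (a x * \<bar>u x\<bar> * phi R x powr (1 / lam)))"
        using deriv_sum_bound[OF R elim(1)] by (simp add: D_def)
      show ?case
      proof (cases "x \<in> D")
        case False then show ?thesis using 1 by (simp add: G_def)
      next
        case True
        then have cf: "c \<le> f x" using elim(3) by (simp add: D_def)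
        have "a x powr lam * c \<le> a x powr lam * f x" using cf by (intro mult_left_mono) auto
        then have ab: "a x powr lam * c \<le> b x" using elim(2) by simp
        have y: "a x * \<bar>u x\<bar> * phi R x powr (1 / lam) \<le> e * (b x * \<bar>u x\<bar> powr lam) * phi R x + T"
          unfolding T_def
          by (rule young_pt) (use a_nonneg b_pos phi_props(1)[OF R] c e lam ab in auto)
        have "Mt * ((1 / R) ^ m * indicator D x * (a x * \<bar>u x\<bar> * phi R x powr (1 / lam)))
            = k * (a x * \<bar>u x\<bar> * phi R x powr (1 / lam))" using True by (simp add: k_def)
        also have "\<dots> \<le> k * (e * (b x * \<bar>u x\<bar> powr lam) * phi R x + T)"
          using y k by (intro mult_left_mono) auto
        also have "\<dots> = G x" using True by (simp add: G_def w_def algebra_simps)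
        finally show ?thesis using 1 by simp
      qed
    qed
    have intG: "integrable lborel G"
      unfolding G_def[abs_def] using intI intD by simp
    have G0: "G x \<ge> 0" for x
      using k e T0 w_nonneg[of x] phi_props(1)[OF R, of x] by (simp add: G_def)
    have intG_eq: "(\<integral>x. G x \<partial>lborel) = k * e * I + k * T * measure lborel D"
      unfolding G_def I_def using intI intD by simp
    have "(\<integral>x. (\<Sum>\<alpha>\<in>multi_indices m. A \<alpha> x (u x) * dpartial \<alpha> (phi R) x) \<partial>lborel) \<le> (\<integral>x. G x \<partial>lborel)"
    proof (cases "integrable lborel (\<lambda>x. \<Sum>\<alpha>\<in>multi_indices m. A \<alpha> x (u x) * dpartial \<alpha> (phi R) x)")
      case True then show ?thesis by (rule integral_mono_AE[OF _ intG AEb])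
    next
      case False
      then have "(\<integral>x. (\<Sum>\<alpha>\<in>multi_indices m. A \<alpha> x (u x) * dpartial \<alpha> (phi R) x) \<partial>lborel) = 0"
        by (rule not_integrable_integral_eq)
      moreover have "(\<integral>x. G x \<partial>lborel) \<ge> 0" by (rule Bochner_Integration.integral_nonneg) (simp add: G0)
      ultimately show ?thesis by simp
    qed
    then have "L \<le> k * e * I + k * T * measure lborel D" using sol_ineq intG_eq by simp
    also have "k * T * measure lborel D \<le> k * T * W0"
      using measD k T0 by (intro mult_left_mono) auto
    finally show ?thesis by (simp add: T_def)
  qed
  have JL: "J R \<le> L" unfolding J_def L_def
  proof (rule Bochner_Integration.integral_mono[OF w_int intL])
    fix x
    show "indicator (cball 0 R) x * w x \<le> w x * phi R x"
      using phi_props(1,3)[OF R, of x] w_nonneg[of x] by (cases "norm x \<le> R") (auto simp: indicator_def)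
  qed simp
  have IL: "I \<le> L" unfolding I_def L_def
  proof (rule Bochner_Integration.integral_mono[OF intI intL])
    fix x
    show "indicator D x * w x * phi R x \<le> w x * phi R x"
      using phi_props(1)[OF R, of x] w_nonneg[of x] by (auto simp: indicator_def)
  qed
  have intDw: "integrable lborel (\<lambda>x. indicator D x * w x)"
  proof -
    have "integrable lborel (\<lambda>x. indicator D x *\<^sub>R (indicator K x * w x))"
      by (rule integrable_mult_indicator[OF Dsets intK])
    moreover have "(\<lambda>x. indicator D x *\<^sub>R (indicator K x * w x)) = (\<lambda>x. indicator D x * w x)"
      using DK by (auto simp: indicator_def fun_eq_iff)
    ultimately show ?thesis by simp
  qed
  have ID: "I \<le> J (th * R) - J R"
  proof -
    have "I \<le> (\<integral>x. indicator D x * w x \<partial>lborel)" unfolding I_def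
    proof (rule Bochner_Integration.integral_mono[OF intI intDw])
      fix x
      show "indicator D x * w x * phi R x \<le> indicator D x * w x"
        using phi_props(1,2)[OF R, of x] w_nonneg[of x] by (auto simp: indicator_def mult_left_le)
    qed
    also have "(\<lambda>x. indicator D x * w x) = (\<lambda>x. indicator K x * w x - indicator (cball 0 R) x * w x)"
    proof -
      have "R < th * R" using th R by simp
      then show ?thesis by (auto simp: fun_eq_iff D_def K_def indicator_def)
    qed
    also have "(\<integral>x. indicator K x * w x - indicator (cball 0 R) x * w x \<partial>lborel) = J (th * R) - J R"
      unfolding J_def K_def using w_int[of "cball 0 (th * R)"] w_int[of "cball 0 R"] by simp
    finally show ?thesis .
  qed
  have I0: "I \<ge> 0" unfolding I_def
    by (rule Bochner_Integration.integral_nonneg) (simp add: w_nonneg phi_props(1)[OF R])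
  show "c * J R powr (lam - 1) \<le> (2 * (Mt * (1 / R) ^ m)) powr lam
           * (measure lborel (ball (0::real^'n) 1) * (th * R) ^ CARD('n)) powr (lam - 1)"
    using young_choice(1)[OF k W c lam J_nonneg JL IL ID I0 key] by (simp add: k_def W0_def)
  show "J R > 0 \<Longrightarrow> c * J R powr lam \<le> (2 * (Mt * (1 / R) ^ m)) powr lam
           * (measure lborel (ball (0::real^'n) 1) * (th * R) ^ CARD('n)) powr (lam - 1) * (J (th * R) - J R)"
    using young_choice(2)[OF k W c lam J_nonneg JL IL ID I0 key] by (simp add: k_def W0_def)
qed

end


context setting
begin

definition pp :: real where "pp = (real m - real CARD('n)) * lam + real CARD('n)"
definition CB :: real where
  "CB = (2 * Mt) powr lam * (measure lborel (ball (0::real^'n) 1) * th ^ CARD('n)) powr (lam - 1)"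
definition Kl :: real where "Kl = 2 powr lam / (lam - 1) + 1 / (1 - 2 powr (1 - lam))"
definition DD :: "real \<Rightarrow> (real^'n) set" where "DD R = cball 0 (th * R) - cball 0 R"

lemma CB_nonneg: "CB \<ge> 0" by (simp add: CB_def)
lemma Kl_pos: "Kl > 0"
proof -
  have "2 powr (1 - lam) < 1" using lam by (simp add: powr_less_one)
  then have "1 / (1 - 2 powr (1 - lam)) > 0" by simp
  moreover have "2 powr lam / (lam - 1) > 0" using lam by simp
  ultimately show ?thesis unfolding Kl_def by (rule add_pos_pos[rotated])
qed

lemma const_eq:
  assumes R: "R > 0"
  shows "(2 * (Mt * (1 / R) ^ m)) powr lam
           * (measure lborel (ball (0::real^'n) 1) * (th * R) ^ CARD('n)) powr (lam - 1) * R powr pp = CB"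
proof -
  define V where "V = measure lborel (ball (0::real^'n) 1)"
  define n where "n = CARD('n)"
  have V: "V > 0" unfolding V_def using content_ball_pos[of 1 "0::real^'n"] by simp
  have M: "Mt > 0" by (rule Mt_pos)
  have e1: "((1 / R) ^ m) powr lam = R powr (- real m * lam)"
    using R by (simp add: powr_realpow[symmetric] powr_powr powr_minus_divide[symmetric] powr_divide
        flip: powr_minus)
  have e2: "(R ^ n) powr (lam - 1) = R powr (real n * (lam - 1))"
    using R by (simp add: powr_realpow[symmetric] powr_powr)
  have "(2 * (Mt * (1 / R) ^ m)) powr lam = (2 * Mt) powr lam * ((1 / R) ^ m) powr lam"
    using M R by (simp add: powr_mult[symmetric] mult.assoc)
  moreover have "(V * (th * R) ^ n) powr (lam - 1) = (V * th ^ n) powr (lam - 1) * (R ^ n) powr (lam - 1)"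
    using V th R by (simp add: powr_mult[symmetric] power_mult_distrib mult_ac)
  ultimately have "(2 * (Mt * (1 / R) ^ m)) powr lam * (V * (th * R) ^ n) powr (lam - 1) * R powr pp
      = (2 * Mt) powr lam * (V * th ^ n) powr (lam - 1) * (R powr (- real m * lam) * R powr (real n * (lam - 1)) * R powr pp)"
    by (simp add: e1 e2 mult_ac)
  also have "R powr (- real m * lam) * R powr (real n * (lam - 1)) * R powr pp = 1"
    using R by (simp add: powr_add[symmetric] pp_def n_def algebra_simps)
  finally show ?thesis by (simp add: CB_def V_def n_def)
qed

lemma step_bounds:
  assumes R: "R > 0" and c: "c > 0"
    and fc: "AE x in lborel. x \<in> DD R \<longrightarrow> c \<le> f x"
  shows "c * R powr pp * J R powr (lam - 1) \<le> CB"
    and "J R > 0 \<Longrightarrow> c * R powr pp * J R powr lam \<le> CB * (J (th * R) - J R)"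
proof -
  have fc': "AE x in lborel. x \<in> cball 0 (th * R) - cball 0 R \<longrightarrow> c \<le> f x" using fc by (simp add: DD_def)
  have Rp: "R powr pp > 0" using R by simp
  note ms = main_step[OF R c fc']
  show "c * R powr pp * J R powr (lam - 1) \<le> CB"
    using mult_right_mono[OF ms(1) less_imp_le[OF Rp]] const_eq[OF R] by (simp add: mult_ac)
  assume JP: "J R > 0"
  let ?X = "(2 * (Mt * (1 / R) ^ m)) powr lam
           * (measure lborel (ball (0::real^'n) 1) * (th * R) ^ CARD('n)) powr (lam - 1)"
  have "c * J R powr lam * R powr pp \<le> ?X * (J (th * R) - J R) * R powr pp"
    by (rule mult_right_mono[OF ms(2)[OF JP] less_imp_le[OF Rp]])
  also have "\<dots> = (?X * R powr pp) * (J (th * R) - J R)" by (simp add: mult_ac)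
  also have "\<dots> = CB * (J (th * R) - J R)" using const_eq[OF R] by simp
  finally show "c * R powr pp * J R powr lam \<le> CB * (J (th * R) - J R)" by (simp add: mult_ac)
qed

lemma step_tele:
  assumes R: "R > 0" and c: "c > 0"
    and fc: "AE x in lborel. x \<in> DD R \<longrightarrow> c \<le> f x" and JP: "J R > 0"
  shows "c * R powr pp \<le> CB * Kl * (J R powr (1 - lam) - J (th * R) powr (1 - lam))"
  unfolding Kl_def
proof (rule tele[OF JP _ lam CB_nonneg])
  show "J R \<le> J (th * R)" using th R by (intro J_mono) simp
  show "c * R powr pp * J R powr (lam - 1) \<le> CB" by (rule step_bounds(1)[OF R c fc])
  show "c * R powr pp * J R powr lam \<le> CB * (J (th * R) - J R)" by (rule step_bounds(2)[OF R c fc JP])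
qed

lemma DD_pos:
  assumes R: "R > 0"
  shows "\<not> (AE x in lborel. x \<notin> DD R)"
proof
  assume ae: "AE x in lborel. x \<notin> DD R"
  define i :: 'n where "i = undefined"
  define z :: "real^'n" where "z = ((1 + th) * R / 2) *\<^sub>R axis i 1"
  define \<rho> where "\<rho> = (th - 1) * R / 2"
  have \<rho>: "\<rho> > 0" using th R by (simp add: \<rho>_def)
  have nz: "norm z = (1 + th) * R / 2" using th R by (simp add: z_def)
  have sub: "ball z \<rho> \<subseteq> DD R"
  proof
    fix y assume "y \<in> ball z \<rho>"
    then have d: "norm (y - z) < \<rho>" by (simp add: dist_norm norm_minus_commute)
    have "norm y \<le> norm z + norm (y - z)" by (metis add.commute diff_add_cancel norm_triangle_ineq)
    moreover have "norm z \<le> norm y + norm (y - z)" by (metis diff_add_cancel norm_minus_commute norm_triangle_ineq add.commute)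
    ultimately show "y \<in> DD R" using d nz by (simp add: DD_def \<rho>_def field_simps)
  qed
  have DDsets: "DD R \<in> sets lborel" by (simp add: DD_def)
  have "emeasure lborel (DD R) = 0"
    using ae by (subst (asm) AE_iff_measurable[OF DDsets]) auto
  then have "emeasure lborel (ball z \<rho>) = 0"
    using emeasure_mono[OF sub DDsets] by simp
  then have "measure lborel (ball z \<rho>) = 0" by (simp add: measure_def)
  then show False using content_ball_pos[OF \<rho>, of z] by simp
qed

lemma essinf_tele:
  assumes R: "R > 0" and JP: "J R > 0"
  shows "ess_inf_on (DD R) f \<le> ereal (CB * Kl * (J R powr (1 - lam) - J (th * R) powr (1 - lam)) / R powr pp)"
  unfolding ess_inf_on_def
proof (rule Sup_least)
  define B where "B = CB * Kl * (J R powr (1 - lam) - J (th * R) powr (1 - lam)) / R powr pp"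
  have "J R \<le> J (th * R)" using th R by (intro J_mono) simp
  then have "J (th * R) powr (1 - lam) \<le> J R powr (1 - lam)" using JP lam by (intro powr_mono2') auto
  then have B0: "B \<ge> 0" unfolding B_def using CB_nonneg Kl_pos by simp
  fix c :: ereal assume "c \<in> {c. AE x in lborel. x \<in> DD R \<longrightarrow> c \<le> ereal (f x)}"
  then have cAE: "AE x in lborel. x \<in> DD R \<longrightarrow> c \<le> ereal (f x)" by simp
  show "c \<le> ereal B"
  proof (cases c)
    case (real r)
    show ?thesis
    proof (cases "r > 0")
      case False then show ?thesis using B0 real by simp
    next
      case True
      have fc: "AE x in lborel. x \<in> DD R \<longrightarrow> r \<le> f x" using cAE real by simp
      have "r * R powr pp \<le> CB * Kl * (J R powr (1 - lam) - J (th * R) powr (1 - lam))"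
        by (rule step_tele[OF R True fc JP])
      then have "r \<le> B" using R by (simp add: B_def pos_le_divide_eq)
      then show ?thesis using real by simp
    qed
  next
    case PInf
    then have "AE x in lborel. x \<notin> DD R" using cAE by (auto elim!: AE_mp)
    then show ?thesis using DD_pos[OF R] by simp
  next
    case MInf then show ?thesis by simp
  qed
qed

lemma essinf_loc:
  assumes R: "R > 0" and fl: "loc_ess_bounded f"
  shows "\<exists>C. ess_inf_on (DD R) f \<le> ereal C"
proof -
  obtain C where C: "AE x in lborel. x \<in> cball 0 (th * R) \<longrightarrow> \<bar>f x\<bar> \<le> C"
    using fl unfolding loc_ess_bounded_def by (meson compact_cball)
  have "ess_inf_on (DD R) f \<le> ereal C"
    unfolding ess_inf_on_def
  proof (rule Sup_least)
    fix c :: ereal assume "c \<in> {c. AE x in lborel. x \<in> DD R \<longrightarrow> c \<le> ereal (f x)}"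
    then have cAE: "AE x in lborel. x \<in> DD R \<longrightarrow> c \<le> ereal (f x)" by simp
    show "c \<le> ereal C"
    proof (rule ccontr)
      assume nc: "\<not> c \<le> ereal C"
      have "AE x in lborel. x \<notin> DD R"
        using cAE C
      proof eventually_elim
        case (elim x)
        show ?case
        proof
          assume xD: "x \<in> DD R"
          then have "c \<le> ereal (f x)" "f x \<le> C" using elim by (auto simp: DD_def)
          then have "c \<le> ereal C" using order_trans by fastforce
          then show False using nc by simp
        qed
      qed
      then show False using DD_pos[OF R] by simp
    qed
  qed
  then show ?thesis by blast
qed

end


lemma ess_inf_mono: "T \<subseteq> S \<Longrightarrow> ess_inf_on S f \<le> ess_inf_on T f"
  unfolding ess_inf_on_def by (rule Sup_subset_mono) (auto elim!: AE_mp)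

lemma pow_interval:
  fixes th r :: real
  assumes th: "th > 1" and r: "r \<ge> 1"
  shows "\<exists>k. th ^ k \<le> r \<and> r < th ^ Suc k"
proof -
  obtain n where n: "r < th ^ n" using real_arch_pow[OF th] by blast
  define N where "N = (LEAST n. r < th ^ n)"
  have N: "r < th ^ N" unfolding N_def by (rule LeastI[of _ n]) (rule n)
  have N0: "N \<noteq> 0" using N r by (intro notI) simp
  then obtain k where k: "N = Suc k" by (cases N) auto
  have "\<not> r < th ^ k" using not_less_Least[of k "\<lambda>n. r < th ^ n"] k by (simp add: N_def)
  then show ?thesis using N k by (intro exI[of _ k]) simp
qed

lemma powr_interval_bound:
  fixes th r q t0 :: real
  assumes th: "th > 1" and t0: "t0 > 0" and r1: "t0 \<le> r" and r2: "r < th * t0"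
  shows "r powr q \<le> th powr \<bar>q\<bar> * t0 powr q"
proof -
  define t where "t = r / t0"
  have t: "t \<ge> 1" "t \<le> th" using r1 r2 t0 by (auto simp: t_def field_simps)
  have rt: "r = t0 * t" using t0 by (simp add: t_def)
  have "t powr q \<le> th powr \<bar>q\<bar>"
  proof (cases "q \<ge> 0")
    case True
    then have "t powr q \<le> th powr q" using t by (intro powr_mono2) auto
    then show ?thesis using True by simp
  next
    case False
    then have "t powr q \<le> t powr 0" using t by (intro powr_mono) auto
    also have "\<dots> = 1" using t by simp
    also have "1 \<le> th powr \<bar>q\<bar>" using th by (simp add: ge_one_powr_ge_zero)
    finally show ?thesis .
  qed
  then have "t0 powr q * t powr q \<le> t0 powr q * th powr \<bar>q\<bar>" by (intro mult_left_mono) auto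
  then show ?thesis using t0 t by (simp add: rt powr_mult mult.commute)
qed

context setting
begin

lemma J_pos_exists:
  assumes nz: "\<not> (AE x in lborel. u x = 0)"
  shows "\<exists>k. J (th ^ k) > 0"
proof (rule ccontr)
  assume "\<not> (\<exists>k. J (th ^ k) > 0)"
  then have J0: "J (th ^ k) = 0" for k using J_nonneg[of "th ^ k"] by (meson not_less order_antisym)
  have "AE x in lborel. indicator (cball 0 (th ^ k)) x * w x = 0" for k
  proof -
    have "integral\<^sup>L lborel (\<lambda>x. indicator (cball 0 (th ^ k)) x * w x) = 0"
      using J0[of k] by (simp add: J_def)
    then show ?thesis
      using integral_nonneg_eq_0_iff_AE[OF w_int[of "cball 0 (th ^ k)"]] w_nonneg by simp
  qed
  then have "AE x in lborel. \<forall>k. indicator (cball 0 (th ^ k)) x * w x = 0"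
    by (subst AE_all_countable) blast
  then have "AE x in lborel. u x = 0"
  proof (rule AE_mp, intro AE_I2 impI)
    fix x :: "real^'n"
    assume H: "\<forall>k. indicator (cball 0 (th ^ k)) x * w x = 0"
    obtain k where "norm x < th ^ k" using real_arch_pow[OF th] by blast
    then have "w x = 0" using H[rule_format, of k] by simp
    then show "u x = 0" using b_pos[rule_format, of x] by (simp add: w_def)
  qed
  then show False using nz by simp
qed

lemma integral_finite:
  assumes fl: "loc_ess_bounded f" and sig: "\<sigma> = th * th" and k0: "J (th ^ k0) > 0"
  shows "(\<integral>\<^sup>+ r\<in>{1..}. ennreal (r powr (pp - 1))
           * e2ennreal (ess_inf_on (ball 0 (\<sigma> * r) - ball 0 (r / \<sigma>)) f) \<partial>lborel) < \<infinity>"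
proof -
  define Q where "Q k = ess_inf_on (DD (th ^ k)) f" for k
  define cth where "cth = th powr \<bar>pp - 1\<bar>"
  define a where "a k = ennreal (cth * (th ^ k) powr (pp - 1)) * e2ennreal (Q k)" for k
  define I where "I k = {th ^ k ..< th ^ Suc k}" for k
  have thp: "th ^ k > 0" for k using th by simp
  have cth: "cth > 0" using th by (simp add: cth_def)
  have pw: "ennreal (r powr (pp - 1)) * e2ennreal (ess_inf_on (ball 0 (\<sigma> * r) - ball 0 (r / \<sigma>)) f)
            * indicator {1..} r \<le> (\<Sum>k. a k * indicator (I k) r)" for r
  proof (cases "r \<ge> 1")
    case False then show ?thesis by simp
  next
    case True
    obtain k where k: "th ^ k \<le> r" "r < th ^ Suc k" using pow_interval[OF th True] by blast
    have sub: "DD (th ^ k) \<subseteq> ball 0 (\<sigma> * r) - ball 0 (r / \<sigma>)"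
    proof
      fix x :: "real^'n" assume "x \<in> DD (th ^ k)"
      then have x: "th ^ k < norm x" "norm x \<le> th * th ^ k" by (auto simp: DD_def)
      have "th * th ^ k < th * th * th ^ k" using th thp[of k] by simp
      also have "th * th * th ^ k \<le> \<sigma> * r" using k(1) th sig by simp
      finally have 1: "norm x < \<sigma> * r" using x(2) by simp
      have "r / \<sigma> < th * th ^ k / \<sigma>" using k(2) th sig by (intro divide_strict_right_mono) auto
      also have "\<dots> = th ^ k / th" using th sig by simp
      also have "\<dots> \<le> th ^ k" using th thp[of k] by (simp add: divide_le_eq)
      finally have 2: "r / \<sigma> < norm x" using x(1) by simp
      show "x \<in> ball 0 (\<sigma> * r) - ball 0 (r / \<sigma>)" using 1 2 by simp
    qed
    have e1: "ess_inf_on (ball 0 (\<sigma> * r) - ball 0 (r / \<sigma>)) f \<le> Q k"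
      using ess_inf_mono[OF sub] by (simp add: Q_def)
    have e2: "r powr (pp - 1) \<le> cth * (th ^ k) powr (pp - 1)"
      using powr_interval_bound[OF th thp k(1), of "pp - 1"] k(2) by (simp add: cth_def)
    have "ennreal (r powr (pp - 1)) * e2ennreal (ess_inf_on (ball 0 (\<sigma> * r) - ball 0 (r / \<sigma>)) f) \<le> a k"
      unfolding a_def by (intro mult_mono ennreal_leI e2 e2ennreal_mono e1) auto
    also have "a k = (\<Sum>j\<in>{k}. a j * indicator (I j) r)" using k by (simp add: I_def)
    also have "\<dots> \<le> (\<Sum>j. a j * indicator (I j) r)" by (rule sum_le_suminf) auto
    finally show ?thesis using True by simp
  qed
  have step1: "(\<integral>\<^sup>+ r\<in>{1..}. ennreal (r powr (pp - 1))
           * e2ennreal (ess_inf_on (ball 0 (\<sigma> * r) - ball 0 (r / \<sigma>)) f) \<partial>lborel)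
        \<le> (\<Sum>k. a k * ennreal (th ^ Suc k - th ^ k))"
  proof -
    have "(\<integral>\<^sup>+ r\<in>{1..}. ennreal (r powr (pp - 1))
           * e2ennreal (ess_inf_on (ball 0 (\<sigma> * r) - ball 0 (r / \<sigma>)) f) \<partial>lborel)
        \<le> (\<integral>\<^sup>+ r. (\<Sum>k. a k * indicator (I k) r) \<partial>lborel)"
      by (rule nn_integral_mono) (rule pw)
    also have "\<dots> = (\<Sum>k. \<integral>\<^sup>+ r. a k * indicator (I k) r \<partial>lborel)"
      by (rule nn_integral_suminf) (simp add: I_def)
    also have "\<dots> = (\<Sum>k. a k * ennreal (th ^ Suc k - th ^ k))"
    proof -
      have "th ^ k \<le> th ^ Suc k" for k using th by simp
      then show ?thesis by (simp add: nn_integral_cmult_indicator I_def)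
    qed
    finally show ?thesis .
  qed
  have "\<forall>k. \<exists>C. Q k \<le> ereal C" using essinf_loc[OF thp fl] by (simp add: Q_def)
  then obtain Cq where Cq: "\<And>k. Q k \<le> ereal (Cq k)" by metis
  define G where "G k = J (th ^ max k k0) powr (1 - lam)" for k
  define Y1 where "Y1 k = (if k < k0 then cth * (th ^ k) powr (pp - 1) * max 0 (Cq k) * (th ^ Suc k - th ^ k) else 0)" for k
  define c2 where "c2 = cth * (th - 1) * CB * Kl"
  define Y where "Y k = Y1 k + c2 * (G k - G (Suc k))" for k
  have Jpos: "J (th ^ k) > 0" if "k \<ge> k0" for k
  proof -
    have "th ^ k0 \<le> th ^ k" using that th by (intro power_increasing) auto
    then show ?thesis using k0 J_mono by (meson less_le_trans)
  qed
  have Gdec: "G (Suc k) \<le> G k" for k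
  proof -
    have "th ^ max k k0 \<le> th ^ max (Suc k) k0" using th by (intro power_increasing) auto
    then have "J (th ^ max k k0) \<le> J (th ^ max (Suc k) k0)" by (rule J_mono)
    then show ?thesis unfolding G_def using Jpos[of "max k k0"] lam by (intro powr_mono2') auto
  qed
  have G0: "G k \<ge> 0" for k by (simp add: G_def)
  have c2: "c2 \<ge> 0" using cth th CB_nonneg Kl_pos by (simp add: c2_def)
  have Y1_0: "Y1 k \<ge> 0" for k using cth th by (simp add: Y1_def)
  have Y0: "Y k \<ge> 0" for k using Y1_0[of k] c2 Gdec[of k] by (simp add: Y_def)
  have Dk: "th ^ Suc k - th ^ k = th ^ k * (th - 1)" for k by (simp add: algebra_simps)
  have term_le: "a k * ennreal (th ^ Suc k - th ^ k) \<le> ennreal (Y k)" for k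
  proof (cases "k < k0")
    case True
    have "Q k \<le> ereal (max 0 (Cq k))" using Cq[of k] by (meson max.cobounded2 ereal_less_eq(3) order_trans)
    then have "e2ennreal (Q k) \<le> e2ennreal (ereal (max 0 (Cq k)))" by (rule e2ennreal_mono)
    then have eq: "e2ennreal (Q k) \<le> ennreal (max 0 (Cq k))" by (simp only: e2ennreal_ereal)
    have "a k * ennreal (th ^ Suc k - th ^ k)
        \<le> ennreal (cth * (th ^ k) powr (pp - 1)) * ennreal (max 0 (Cq k)) * ennreal (th ^ Suc k - th ^ k)"
      unfolding a_def by (intro mult_mono eq) auto
    also have "\<dots> = ennreal (cth * (th ^ k) powr (pp - 1) * max 0 (Cq k) * (th ^ Suc k - th ^ k))"
      using cth th by (simp add: ennreal_mult[symmetric])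
    also have "\<dots> = ennreal (Y1 k)" using True by (simp add: Y1_def)
    also have "\<dots> \<le> ennreal (Y k)" using c2 Gdec[of k] by (intro ennreal_leI) (simp add: Y_def)
    finally show ?thesis .
  next
    case False
    then have kk: "k0 \<le> k" by simp
    have JP: "J (th ^ k) > 0" by (rule Jpos[OF kk])
    have Gk: "G k = J (th ^ k) powr (1 - lam)" "G (Suc k) = J (th * th ^ k) powr (1 - lam)"
      using kk by (simp_all add: G_def max_def)
    define B where "B = CB * Kl * (G k - G (Suc k))"
    have B0: "B \<ge> 0" using CB_nonneg Kl_pos Gdec[of k] by (simp add: B_def)
    have "Q k \<le> ereal (B / (th ^ k) powr pp)"
      using essinf_tele[OF thp JP] by (simp add: Q_def B_def Gk)
    then have "e2ennreal (Q k) \<le> e2ennreal (ereal (B / (th ^ k) powr pp))" by (rule e2ennreal_mono)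
    then have eq: "e2ennreal (Q k) \<le> ennreal (B / (th ^ k) powr pp)" by (simp only: e2ennreal_ereal)
    have "a k * ennreal (th ^ Suc k - th ^ k)
        \<le> ennreal (cth * (th ^ k) powr (pp - 1)) * ennreal (B / (th ^ k) powr pp) * ennreal (th ^ k * (th - 1))"
      unfolding a_def Dk by (intro mult_mono eq) auto
    also have "\<dots> = ennreal (cth * (th ^ k) powr (pp - 1) * (B / (th ^ k) powr pp) * (th ^ k * (th - 1)))"
      using cth th B0 by (simp add: ennreal_mult[symmetric])
    also have "cth * (th ^ k) powr (pp - 1) * (B / (th ^ k) powr pp) * (th ^ k * (th - 1))
        = cth * B * (th - 1) * (((th ^ k) powr (pp - 1) * th ^ k) / (th ^ k) powr pp)"
      by (simp add: field_simps)
    also have "(th ^ k) powr (pp - 1) * th ^ k = (th ^ k) powr pp"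
      using thp[of k] by (simp add: powr_diff)
    also have "cth * B * (th - 1) * ((th ^ k) powr pp / (th ^ k) powr pp) = Y k"
      using thp[of k] False th by (simp add: Y_def Y1_def B_def c2_def mult_ac)
    finally show ?thesis by simp
  qed
  have sumY: "summable Y"
  proof (rule summableI_nonneg_bounded[OF Y0])
    fix n
    have "(\<Sum>i<n. Y i) = (\<Sum>i<n. Y1 i) + c2 * (\<Sum>i<n. G i - G (Suc i))"
      by (simp add: Y_def sum.distrib sum_distrib_left)
    also have "(\<Sum>i<n. G i - G (Suc i)) = G 0 - G n" by (rule sum_lessThan_telescope')
    also have "(\<Sum>i<n. Y1 i) = (\<Sum>i\<in>{..<n} \<inter> {..<k0}. Y1 i)"
      by (rule sum.mono_neutral_right) (auto simp: Y1_def)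
    also have "\<dots> \<le> (\<Sum>i<k0. Y1 i)" by (rule sum_mono2) (auto simp: Y1_0)
    finally have H: "(\<Sum>i<n. Y i) \<le> (\<Sum>i<k0. Y1 i) + c2 * (G 0 - G n)" by auto
    have "c2 * G n \<ge> 0" using c2 G0[of n] by simp
    then show "(\<Sum>i<n. Y i) \<le> (\<Sum>i<k0. Y1 i) + c2 * G 0" using H by (simp add: algebra_simps)
  qed
  have "(\<Sum>k. a k * ennreal (th ^ Suc k - th ^ k)) \<le> (\<Sum>k. ennreal (Y k))"
    by (rule suminf_le[OF term_le]) auto
  also have "\<dots> = ennreal (\<Sum>k. Y k)" by (rule suminf_ennreal2[OF Y0 sumY])
  finally have "(\<Sum>k. a k * ennreal (th ^ Suc k - th ^ k)) < \<infinity>" by (simp add: le_less_trans)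
  then show ?thesis using step1 by (simp add: le_less_trans)
qed

end


theorem theorem4p1:
  fixes m :: nat and lam \<sigma> :: real
    and A :: "('n::finite \<Rightarrow> nat) \<Rightarrow> real^'n \<Rightarrow> real \<Rightarrow> real"
    and a b f u :: "real^'n \<Rightarrow> real"
  assumes m: "m \<ge> 1" and lam: "lam > 1"
    and b_pos: "\<forall>x. b x > 0" and b_meas: "b \<in> borel_measurable lborel"
    and a_nonneg: "\<forall>x. a x \<ge> 0" and a_meas: "a \<in> borel_measurable lborel"
    and A_bound: "AE x in lborel. \<forall>\<zeta>. \<forall>\<alpha>\<in>multi_indices m. \<bar>A \<alpha> x \<zeta>\<bar> \<le> a x * \<bar>\<zeta>\<bar>"
    and f_loc: "loc_ess_bounded f" and f_nonneg: "\<forall>x. f x \<ge> 0"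
    and b_ge: "AE x in lborel. b x \<ge> a x powr lam * f x"
    and sigma: "\<sigma> > 1"
    and diverge: "(\<integral>\<^sup>+ r\<in>{1..}. ennreal (r powr ((real m - real CARD('n)) * lam + real CARD('n) - 1))
                     * e2ennreal (ess_inf_on (ball 0 (\<sigma> * r) - ball 0 (r / \<sigma>)) f) \<partial>lborel) = \<infinity>"
    and sol: "is_solution m A b lam u"
  shows "AE x in lborel. u x = 0"
proof (rule ccontr)
  assume nz: "\<not> (AE x in lborel. u x = 0)"
  define th where "th = sqrt \<sigma>"
  have th: "th > 1" using sigma by (simp add: th_def)
  have sig: "\<sigma> = th * th" using sigma by (simp add: th_def)
  define s where "s = nat \<lceil>real m * lam / (lam - 1)\<rceil>"
  have s1: "real s \<ge> real m * lam / (lam - 1)" unfolding s_def by (rule real_nat_ceiling_ge)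
  have "real m * lam / (lam - 1) > real m" using m lam by (simp add: field_simps)
  then have sm: "m < s" using s1 by linarith
  have "real m * lam \<le> real s * (lam - 1)" using s1 lam by (simp add: field_simps)
  then have ss: "real s \<le> real (s - m) * lam" using sm by (simp add: of_nat_diff algebra_simps)
  interpret S: setting m lam A a b f u th s
    by unfold_locales (use m lam b_pos a_nonneg A_bound b_ge sol th sm ss in auto)
  obtain k0 where k0: "S.J (th ^ k0) > 0" using S.J_pos_exists[OF nz] by blast
  have "(\<integral>\<^sup>+ r\<in>{1..}. ennreal (r powr (S.pp - 1))
           * e2ennreal (ess_inf_on (ball 0 (\<sigma> * r) - ball 0 (r / \<sigma>)) f) \<partial>lborel) < \<infinity>"
    by (rule S.integral_finite[OF f_loc sig k0])
  moreover have "S.pp - 1 = (real m - real CARD('n)) * lam + real CARD('n) - 1" by (simp add: S.pp_def)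
  ultimately show False using diverge by simp
qed


end
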